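(* Let $U$ be a projection family and let $\Phi$ be a Følner sequence in $\mathbb{N}$. For every $f\in L^2(\mathbb{N},\Phi)$ there exist a subsequence $\Psi$ of $\Phi$ and $f_U\in U(\Psi)$ such that: (1) $f-f_U\in U(\Psi)^\perp$; (2) $\|f-f_U\|_\Psi=\inf\{\|f-g\|_\Psi: g\in U(\Psi)\}$; (3) if $f$ takes values in an interval $[a,b]$ then $f_U$ takes values in $[a,b]$.
   Context: A Følner sequence in $\mathbb{N}$ is a sequence $\Phi\colon N\mapsto\Phi_N$ of finite non-empty subsets of $\mathbb{N}$ with $|(\Phi_N+m)\triangle\Phi_N|/|\Phi_N|\to0$ for all $m\in\mathbb{N}$. $\|f\|_\Phi=\big(\limsup_{N\to\infty}\frac{1}{|\Phi_N|}\sum_{n\in\Phi_N}|f(n)|^2\big)^{1/2}$, $L^2(\mathbb{N},\Phi)=\{f\colon\mathbb{N}\to\mathbb{C}:\|f\|_\Phi<\infty\}$, and $\langle f,h\rangle_\Phi=\lim_{N\to\infty}\frac{1}{|\Phi_N|}\sum_{n\in\Phi_N}f(n)\overline{h(n)}$ when the limit exists. A projection family is an assignment $\Phi\mapsto U(\Phi)$, defined for every Følner sequence $\Phi$, such that: $U(\Phi)$ is a vector subspace of $L^2(\mathbb{N},\Phi)$; $U(\Phi)$ contains the constant functions and is closed under pointwise complex conjugation; $\langle u,v\rangle_\Phi$ exists for all $u,v\in U(\Phi)$; if $u,v\in U(\Phi)$ are real-valued then $n\mapsto\max\{u(n),v(n)\}$ is in $U(\Phi)$; $U(\Phi)$ is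 closed in the topology induced by $\|\cdot\|_\Phi$; and if $\Psi$ eventually agrees with a subsequence of $\Phi$ then $U(\Psi)\supset U(\Phi)$. For such $U$, $U(\Phi)^\perp=\{v\in L^2(\mathbb{N},\Phi): \langle u,v\rangle_\Phi \text{ exists and equals } 0 \text{ for all } u\in U(\Phi)\}$. *)

theory Defs
  imports "HOL-Analysis.Analysis" "HOL-Library.Liminf_Limsup"
begin

text \<open>Natural numbers are rendered by the type nat (including 0).\<close>

definition folner :: "(nat \<Rightarrow> nat set) \<Rightarrow> bool" where
  "folner \<Phi> \<longleftrightarrow>
     (\<forall>N. finite (\<Phi> N) \<and> \<Phi> N \<noteq> {}) \<and>
     (\<forall>m::nat. (\<lambda>N. real (card ((((\<lambda>n. n + m) ` \<Phi> N) - \<Phi> N) \<union> (\<Phi> N - ((\<lambda>n. n + m) ` \<Phi> N))))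
                     / real (card (\<Phi> N))) \<longlonglongrightarrow> 0)"

definition favg :: "(nat \<Rightarrow> nat set) \<Rightarrow> (nat \<Rightarrow> 'a::real_normed_field) \<Rightarrow> nat \<Rightarrow> 'a" where
  "favg \<Phi> g N = (\<Sum>n\<in>\<Phi> N. g n) / of_nat (card (\<Phi> N))"

definition sqlimsup :: "(nat \<Rightarrow> nat set) \<Rightarrow> (nat \<Rightarrow> complex) \<Rightarrow> ereal" where
  "sqlimsup \<Phi> f = limsup (\<lambda>N. ereal (favg \<Phi> (\<lambda>n. (cmod (f n))\<^sup>2) N))"

definition L2 :: "(nat \<Rightarrow> nat set) \<Rightarrow> (nat \<Rightarrow> complex) set" where
  "L2 \<Phi> = {f. sqlimsup \<Phi> f < \<infinity>}"

text \<open>The seminorm; meaningful for f in L2 (for such f the limsup is a finite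
  nonnegative real).\<close>
definition fnorm :: "(nat \<Rightarrow> nat set) \<Rightarrow> (nat \<Rightarrow> complex) \<Rightarrow> real" where
  "fnorm \<Phi> f = sqrt (real_of_ereal (sqlimsup \<Phi> f))"

definition inner_exists :: "(nat \<Rightarrow> nat set) \<Rightarrow> (nat \<Rightarrow> complex) \<Rightarrow> (nat \<Rightarrow> complex) \<Rightarrow> bool" where
  "inner_exists \<Phi> f h \<longleftrightarrow> convergent (favg \<Phi> (\<lambda>n. f n * cnj (h n)))"

definition finner :: "(nat \<Rightarrow> nat set) \<Rightarrow> (nat \<Rightarrow> complex) \<Rightarrow> (nat \<Rightarrow> complex) \<Rightarrow> complex" where
  "finner \<Phi> f h = lim (favg \<Phi> (\<lambda>n. f n * cnj (h n)))"

definition eventually_subseq :: "(nat \<Rightarrow> nat set) \<Rightarrow> (nat \<Rightarrow> nat set) \<Rightarrow> bool" where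
  "eventually_subseq \<Psi> \<Phi> \<longleftrightarrow>
     (\<exists>\<sigma>::nat \<Rightarrow> nat. strict_mono \<sigma> \<and> (\<exists>N0. \<forall>N\<ge>N0. \<Psi> N = \<Phi> (\<sigma> N)))"

definition is_real_valued :: "(nat \<Rightarrow> complex) \<Rightarrow> bool" where
  "is_real_valued u \<longleftrightarrow> (\<forall>n. u n \<in> \<real>)"

definition projection_family :: "((nat \<Rightarrow> nat set) \<Rightarrow> (nat \<Rightarrow> complex) set) \<Rightarrow> bool" where
  "projection_family U \<longleftrightarrow>
    (\<forall>\<Phi>. folner \<Phi> \<longrightarrow>
       \<comment> \<open>complex vector subspace of L2\<close>
       U \<Phi> \<subseteq> L2 \<Phi> \<and>
       (\<lambda>n. 0) \<in> U \<Phi> \<and>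
       (\<forall>u\<in>U \<Phi>. \<forall>v\<in>U \<Phi>. (\<lambda>n. u n + v n) \<in> U \<Phi>) \<and>
       (\<forall>c::complex. \<forall>u\<in>U \<Phi>. (\<lambda>n. c * u n) \<in> U \<Phi>) \<and>
       \<comment> \<open>constants, conjugation\<close>
       (\<forall>c::complex. (\<lambda>n. c) \<in> U \<Phi>) \<and>
       (\<forall>u\<in>U \<Phi>. (\<lambda>n. cnj (u n)) \<in> U \<Phi>) \<and>
       \<comment> \<open>inner products exist\<close>
       (\<forall>u\<in>U \<Phi>. \<forall>v\<in>U \<Phi>. inner_exists \<Phi> u v) \<and>
       \<comment> \<open>closed under max of real-valued elements\<close>
       (\<forall>u\<in>U \<Phi>. \<forall>v\<in>U \<Phi>. is_real_valued u \<longrightarrow> is_real_valued v \<longrightarrow>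
            (\<lambda>n. complex_of_real (max (Re (u n)) (Re (v n)))) \<in> U \<Phi>) \<and>
       \<comment> \<open>closed in the seminorm topology of L2\<close>
       (\<forall>f\<in>L2 \<Phi>. (\<forall>\<epsilon>>0. \<exists>u\<in>U \<Phi>. fnorm \<Phi> (\<lambda>n. f n - u n) < \<epsilon>) \<longrightarrow> f \<in> U \<Phi>)) \<and>
    (\<forall>\<Phi> \<Psi>. folner \<Phi> \<longrightarrow> folner \<Psi> \<longrightarrow> eventually_subseq \<Psi> \<Phi> \<longrightarrow> U \<Phi> \<subseteq> U \<Psi>)"

definition perp :: "((nat \<Rightarrow> nat set) \<Rightarrow> (nat \<Rightarrow> complex) set) \<Rightarrow> (nat \<Rightarrow> nat set) \<Rightarrow> (nat \<Rightarrow> complex) set" where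
  "perp U \<Phi> = {v \<in> L2 \<Phi>. \<forall>u\<in>U \<Phi>. inner_exists \<Phi> u v \<and> finner \<Phi> u v = 0}"

end

theory Submission
  imports Defs "HOL-Library.Diagonal_Subsequence"
begin


definition sq :: "(nat \<Rightarrow> nat set) \<Rightarrow> (nat \<Rightarrow> complex) \<Rightarrow> nat \<Rightarrow> real" where
  "sq X x N = favg X (\<lambda>n. (cmod (x n))\<^sup>2) N"

lemma favg_mono_real:
  fixes g h :: "nat \<Rightarrow> real"
  assumes "\<And>n. g n \<le> h n"
  shows "favg X g N \<le> favg X h N"
  unfolding favg_def by (intro divide_right_mono sum_mono assms) auto

lemma favg_lin:
  fixes g h :: "nat \<Rightarrow> 'a::real_normed_field"
  shows "favg X (\<lambda>n. a * g n + b * h n) N = a * favg X g N + b * favg X h N"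
  unfolding favg_def by (simp add: sum.distrib sum_distrib_left add_divide_distrib)

lemma favg_comp: "favg (X \<circ> r) g N = favg X g (r N)"
  by (simp add: favg_def)

lemma sq_nonneg: "0 \<le> sq X x N"
  unfolding sq_def favg_def by (intro divide_nonneg_nonneg sum_nonneg) auto

lemma sq_comp: "sq (X \<circ> r) x N = sq X x (r N)"
  by (simp add: sq_def favg_def)

lemma sq_le_comb:
  assumes "\<And>n. (cmod (x n))\<^sup>2 \<le> a * (cmod (y n))\<^sup>2 + b * (cmod (z n))\<^sup>2"
  shows "sq X x N \<le> a * sq X y N + b * sq X z N"
proof -
  have "sq X x N \<le> favg X (\<lambda>n. a * (cmod (y n))\<^sup>2 + b * (cmod (z n))\<^sup>2) N"
    unfolding sq_def by (rule favg_mono_real) (rule assms)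
  also have "\<dots> = a * sq X y N + b * sq X z N"
    unfolding sq_def by (rule favg_lin)
  finally show ?thesis .
qed

lemma sqlimsup_sq: "sqlimsup X x = limsup (\<lambda>N. ereal (sq X x N))"
  by (simp add: sqlimsup_def sq_def)

lemma sqlimsup_nonneg: "0 \<le> sqlimsup X x"
  unfolding sqlimsup_sq by (rule le_Limsup) (auto simp: sq_nonneg)

lemma L2_fin:
  assumes "x \<in> L2 X"
  shows "sqlimsup X x = ereal ((fnorm X x)\<^sup>2) \<and> 0 \<le> fnorm X x"
proof -
  have a: "sqlimsup X x < \<infinity>" using assms by (simp add: L2_def)
  have b: "0 \<le> sqlimsup X x" by (rule sqlimsup_nonneg)
  obtain r where r: "sqlimsup X x = ereal r" using a b by (cases "sqlimsup X x") auto
  have "0 \<le> r" using b r by simp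
  then show ?thesis using r by (simp add: fnorm_def)
qed

lemma ev_lt:
  assumes "x \<in> L2 X" "fnorm X x < c"
  shows "eventually (\<lambda>N. sq X x N < c\<^sup>2) sequentially"
proof -
  have f: "sqlimsup X x = ereal ((fnorm X x)\<^sup>2)" "0 \<le> fnorm X x" using L2_fin[OF assms(1)] by auto
  have "(fnorm X x)\<^sup>2 < c\<^sup>2" using assms(2) f(2) by (simp add: power_strict_mono)
  then have "limsup (\<lambda>N. ereal (sq X x N)) < ereal (c\<^sup>2)" using f(1) by (simp add: sqlimsup_sq)
  from Limsup_lessD[OF this] show ?thesis by simp
qed

lemma ev_le_L2:
  assumes "eventually (\<lambda>N. sq X x N \<le> c) sequentially"
  shows "x \<in> L2 X \<and> sqlimsup X x \<le> ereal c"
proof -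
  have "sqlimsup X x \<le> ereal c" unfolding sqlimsup_sq
    by (rule Limsup_bounded) (use assms in \<open>auto elim: eventually_mono\<close>)
  then show ?thesis by (auto simp: L2_def)
qed

lemma le_fnorm:
  assumes "\<And>\<eta>. \<eta> > 0 \<Longrightarrow> eventually (\<lambda>N. sq X x N \<le> c + \<eta>) sequentially"
  shows "x \<in> L2 X \<and> fnorm X x \<le> sqrt c"
proof -
  have L: "x \<in> L2 X" using ev_le_L2[OF assms[of 1]] by simp
  have f: "sqlimsup X x = ereal ((fnorm X x)\<^sup>2)" "0 \<le> fnorm X x" using L2_fin[OF L] by auto
  have "(fnorm X x)\<^sup>2 \<le> c + \<eta>" if "\<eta> > 0" for \<eta>
    using ev_le_L2[OF assms[OF that]] f(1) by simp
  then have "(fnorm X x)\<^sup>2 \<le> c" by (meson field_le_epsilon)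
  then have "sqrt ((fnorm X x)\<^sup>2) \<le> sqrt c" by (rule real_sqrt_le_mono)
  then show ?thesis using L f(2) by simp
qed

lemma fnorm_nonneg: "0 \<le> fnorm X x"
  using sqlimsup_nonneg[of X x] by (simp add: fnorm_def real_of_ereal_pos)

lemma L2_combo:
  assumes "y \<in> L2 X" "z \<in> L2 X" "a \<ge> 0" "b \<ge> 0"
    and "\<And>n. (cmod (x n))\<^sup>2 \<le> a * (cmod (y n))\<^sup>2 + b * (cmod (z n))\<^sup>2"
  shows "x \<in> L2 X"
proof -
  have "eventually (\<lambda>N. sq X y N < (fnorm X y + 1)\<^sup>2) sequentially"
    by (rule ev_lt[OF assms(1)]) simp
  moreover have "eventually (\<lambda>N. sq X z N < (fnorm X z + 1)\<^sup>2) sequentially"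
    by (rule ev_lt[OF assms(2)]) simp
  ultimately have "eventually (\<lambda>N. sq X x N \<le> a * (fnorm X y + 1)\<^sup>2 + b * (fnorm X z + 1)\<^sup>2) sequentially"
  proof eventually_elim
    case (elim N)
    have "sq X x N \<le> a * sq X y N + b * sq X z N" by (rule sq_le_comb) (rule assms(5))
    also have "\<dots> \<le> a * (fnorm X y + 1)\<^sup>2 + b * (fnorm X z + 1)\<^sup>2"
      using elim assms(3,4) by (intro add_mono mult_left_mono) auto
    finally show ?case .
  qed
  then show ?thesis using ev_le_L2 by blast
qed

lemma cmod_sq_add_le: "(cmod (a + b))\<^sup>2 \<le> 2 * (cmod a)\<^sup>2 + 2 * (cmod b)\<^sup>2"
proof -
  have "(cmod (a + b))\<^sup>2 \<le> (cmod a + cmod b)\<^sup>2"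
    by (simp add: norm_triangle_ineq power_mono)
  also have "\<dots> \<le> 2 * (cmod a)\<^sup>2 + 2 * (cmod b)\<^sup>2"
    using sum_squares_bound[of "cmod a" "cmod b"] by (simp add: power2_eq_square algebra_simps)
  finally show ?thesis .
qed

lemma L2_add: "x \<in> L2 X \<Longrightarrow> y \<in> L2 X \<Longrightarrow> (\<lambda>n. x n + y n) \<in> L2 X"
  by (rule L2_combo[of x X y 2 2]) (auto intro: cmod_sq_add_le)

lemma L2_diff: "x \<in> L2 X \<Longrightarrow> y \<in> L2 X \<Longrightarrow> (\<lambda>n. x n - y n) \<in> L2 X"
proof (rule L2_combo[of x X y 2 2])
  fix n show "(cmod (x n - y n))\<^sup>2 \<le> 2 * (cmod (x n))\<^sup>2 + 2 * (cmod (y n))\<^sup>2"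
    using cmod_sq_add_le[of "x n" "- y n"] by simp
qed auto



lemma PF_D:
  assumes "projection_family U" "folner X"
  shows "U X \<subseteq> L2 X \<and>
       (\<lambda>n. 0) \<in> U X \<and>
       (\<forall>u\<in>U X. \<forall>v\<in>U X. (\<lambda>n. u n + v n) \<in> U X) \<and>
       (\<forall>c::complex. \<forall>u\<in>U X. (\<lambda>n. c * u n) \<in> U X) \<and>
       (\<forall>c::complex. (\<lambda>n. c) \<in> U X) \<and>
       (\<forall>u\<in>U X. (\<lambda>n. cnj (u n)) \<in> U X) \<and>
       (\<forall>u\<in>U X. \<forall>v\<in>U X. inner_exists X u v) \<and>
       (\<forall>u\<in>U X. \<forall>v\<in>U X. is_real_valued u \<longrightarrow> is_real_valued v \<longrightarrow>
            (\<lambda>n. complex_of_real (max (Re (u n)) (Re (v n)))) \<in> U X) \<and>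
       (\<forall>f\<in>L2 X. (\<forall>\<epsilon>>0. \<exists>u\<in>U X. fnorm X (\<lambda>n. f n - u n) < \<epsilon>) \<longrightarrow> f \<in> U X)"
proof -
  have "\<forall>\<Phi>. folner \<Phi> \<longrightarrow>
       U \<Phi> \<subseteq> L2 \<Phi> \<and>
       (\<lambda>n. 0) \<in> U \<Phi> \<and>
       (\<forall>u\<in>U \<Phi>. \<forall>v\<in>U \<Phi>. (\<lambda>n. u n + v n) \<in> U \<Phi>) \<and>
       (\<forall>c::complex. \<forall>u\<in>U \<Phi>. (\<lambda>n. c * u n) \<in> U \<Phi>) \<and>
       (\<forall>c::complex. (\<lambda>n. c) \<in> U \<Phi>) \<and>
       (\<forall>u\<in>U \<Phi>. (\<lambda>n. cnj (u n)) \<in> U \<Phi>) \<and>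
       (\<forall>u\<in>U \<Phi>. \<forall>v\<in>U \<Phi>. inner_exists \<Phi> u v) \<and>
       (\<forall>u\<in>U \<Phi>. \<forall>v\<in>U \<Phi>. is_real_valued u \<longrightarrow> is_real_valued v \<longrightarrow>
            (\<lambda>n. complex_of_real (max (Re (u n)) (Re (v n)))) \<in> U \<Phi>) \<and>
       (\<forall>f\<in>L2 \<Phi>. (\<forall>\<epsilon>>0. \<exists>u\<in>U \<Phi>. fnorm \<Phi> (\<lambda>n. f n - u n) < \<epsilon>) \<longrightarrow> f \<in> U \<Phi>)"
    using assms(1) unfolding projection_family_def by (rule conjunct1)
  then show ?thesis using assms(2) by (elim allE impE)
qed

lemma PF_L2: "projection_family U \<Longrightarrow> folner X \<Longrightarrow> U X \<subseteq> L2 X"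
  using PF_D by blast
lemma PF_add: "projection_family U \<Longrightarrow> folner X \<Longrightarrow> u \<in> U X \<Longrightarrow> v \<in> U X \<Longrightarrow> (\<lambda>n. u n + v n) \<in> U X"
  using PF_D by blast
lemma PF_scale: "projection_family U \<Longrightarrow> folner X \<Longrightarrow> u \<in> U X \<Longrightarrow> (\<lambda>n. c * u n) \<in> U X"
  using PF_D by blast
lemma PF_const: "projection_family U \<Longrightarrow> folner X \<Longrightarrow> (\<lambda>n. c) \<in> U X"
  using PF_D by blast
lemma PF_cnj: "projection_family U \<Longrightarrow> folner X \<Longrightarrow> u \<in> U X \<Longrightarrow> (\<lambda>n. cnj (u n)) \<in> U X"
  using PF_D by blast
lemma PF_max: "projection_family U \<Longrightarrow> folner X \<Longrightarrow> u \<in> U X \<Longrightarrow> v \<in> U X \<Longrightarrow>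
   is_real_valued u \<Longrightarrow> is_real_valued v \<Longrightarrow> (\<lambda>n. complex_of_real (max (Re (u n)) (Re (v n)))) \<in> U X"
  using PF_D by blast
lemma PF_closed: "projection_family U \<Longrightarrow> folner X \<Longrightarrow> f \<in> L2 X \<Longrightarrow>
   (\<And>\<epsilon>. \<epsilon> > 0 \<Longrightarrow> \<exists>u\<in>U X. fnorm X (\<lambda>n. f n - u n) < \<epsilon>) \<Longrightarrow> f \<in> U X"
  using PF_D by blast
lemma PF_mono: "projection_family U \<Longrightarrow> folner X \<Longrightarrow> folner Y \<Longrightarrow> eventually_subseq Y X \<Longrightarrow> U X \<subseteq> U Y"
  unfolding projection_family_def by (elim conjE allE impE)

lemma folner_comp:
  assumes "folner X" "strict_mono r"
  shows "folner (X \<circ> r)"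
proof -
  have "(\<lambda>N. real (card ((((\<lambda>n. n + m) ` X N) - X N) \<union> (X N - ((\<lambda>n. n + m) ` X N))))
                     / real (card (X N))) \<longlonglongrightarrow> 0" for m
    using assms(1) unfolding folner_def by blast
  from LIMSEQ_subseq_LIMSEQ[OF this assms(2)] show ?thesis
    using assms(1) unfolding folner_def by (simp add: o_def)
qed

lemma folner_card:
  assumes "folner X"
  shows "eventually (\<lambda>N. C < card (X N)) sequentially"
proof -
  have fin: "finite (X N)" "X N \<noteq> {}" for N using assms unfolding folner_def by auto
  define q where "q N = real (card ((((\<lambda>n. n + 1) ` X N) - X N) \<union> (X N - ((\<lambda>n. n + 1) ` X N))))
                     / real (card (X N))" for N
  have lim: "q \<longlonglongrightarrow> 0" using assms unfolding folner_def q_def by blast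
  have ge: "1 / real (card (X N)) \<le> q N" for N
  proof -
    let ?S = "(((\<lambda>n. n + 1) ` X N) - X N) \<union> (X N - ((\<lambda>n. n + 1) ` X N))"
    have M1: "Max (X N) \<in> X N" using fin[of N] by simp
    have M2: "Max (X N) + 1 \<notin> X N"
    proof
      assume "Max (X N) + 1 \<in> X N"
      from Max_ge[OF fin(1) this] show False by simp
    qed
    have "Max (X N) + 1 \<in> (\<lambda>n. n + 1) ` X N" using M1 by blast
    then have "Max (X N) + 1 \<in> ?S" using M2 by blast
    moreover have "finite ?S" using fin by auto
    ultimately have "1 \<le> card ?S" by (metis One_nat_def Suc_leI card_gt_0_iff empty_iff)
    then show ?thesis unfolding q_def using fin[of N]
      by (intro divide_right_mono) auto
  qed
  have "eventually (\<lambda>N. q N < 1 / (real C + 1)) sequentially"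
    using lim by (rule order_tendstoD) simp
  then show ?thesis
  proof eventually_elim
    case (elim N)
    have cp: "0 < card (X N)" using fin by (simp add: card_gt_0_iff)
    have "1 / real (card (X N)) < 1 / (real C + 1)" using ge[of N] elim by linarith
    then have "inverse (real (card (X N))) < inverse (real C + 1)" by (simp add: inverse_eq_divide)
    then have "real C + 1 < real (card (X N))" using cp
      by (subst (asm) inverse_less_iff_less) auto
    then show ?case by simp
  qed
qed

lemma ES_comp: "strict_mono r \<Longrightarrow> eventually_subseq (X \<circ> r) X"
  unfolding eventually_subseq_def by auto

lemma ES_intro:
  assumes "\<And>i. i \<ge> i0 \<Longrightarrow> Y i = X (\<tau> i)" "\<And>i. i \<ge> i0 \<Longrightarrow> \<tau> i < \<tau> (Suc i)" "i0 \<le> \<tau> i0"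
  shows "eventually_subseq Y X"
proof -
  define \<sigma> where "\<sigma> i = (if i < i0 then i else \<tau> i)" for i
  have "\<sigma> i < \<sigma> (Suc i)" for i
  proof (cases "Suc i < i0")
    case True then show ?thesis by (simp add: \<sigma>_def)
  next
    case False
    then have "Suc i = i0 \<or> i \<ge> i0" by auto
    then show ?thesis
    proof
      assume "Suc i = i0" then show ?thesis using assms(3) by (auto simp: \<sigma>_def)
    next
      assume "i \<ge> i0" then show ?thesis using assms(2)[of i] by (auto simp: \<sigma>_def)
    qed
  qed
  then have "strict_mono \<sigma>" by (simp add: strict_mono_Suc_iff)
  moreover have "\<forall>N\<ge>i0. Y N = X (\<sigma> N)" using assms(1) by (auto simp: \<sigma>_def)
  ultimately show ?thesis unfolding eventually_subseq_def by blast
qed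

lemma ES_trans:
  assumes "eventually_subseq Z Y" "eventually_subseq Y X"
  shows "eventually_subseq Z X"
proof -
  obtain s N0 where s: "strict_mono s" "\<forall>N\<ge>N0. Z N = Y (s N)" using assms(1) unfolding eventually_subseq_def by blast
  obtain t N1 where t: "strict_mono t" "\<forall>N\<ge>N1. Y N = X (t N)" using assms(2) unfolding eventually_subseq_def by blast
  have "\<forall>N\<ge>N0 + N1. Z N = X ((t \<circ> s) N)"
  proof (intro allI impI)
    fix N assume "N \<ge> N0 + N1"
    moreover have "s N \<ge> N" using seq_suble[OF s(1)] by simp
    ultimately show "Z N = X ((t \<circ> s) N)" using s t by auto
  qed
  moreover have "strict_mono (t \<circ> s)" using s t by (simp add: strict_mono_o)
  ultimately show ?thesis unfolding eventually_subseq_def by blast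
qed

lemma ES_sqlimsup:
  assumes "eventually_subseq Y X"
  shows "sqlimsup Y x \<le> sqlimsup X x"
proof -
  obtain s N0 where s: "strict_mono s" "\<forall>N\<ge>N0. Y N = X (s N)" using assms unfolding eventually_subseq_def by blast
  have "limsup (\<lambda>N. ereal (sq Y x N)) = limsup ((\<lambda>N. ereal (sq X x N)) \<circ> s)"
  proof (rule Limsup_eq)
    have "\<forall>N\<ge>N0. sq Y x N = sq X x (s N)" using s(2) by (simp add: sq_def favg_def)
    then show "\<forall>\<^sub>F N in sequentially. ereal (sq Y x N) = ((\<lambda>N. ereal (sq X x N)) \<circ> s) N"
      unfolding eventually_sequentially by auto
  qed
  also have "\<dots> \<le> limsup (\<lambda>N. ereal (sq X x N))" by (rule limsup_subseq_mono[OF s(1)])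
  finally show ?thesis by (simp add: sqlimsup_sq)
qed

lemma ES_L2: "eventually_subseq Y X \<Longrightarrow> x \<in> L2 X \<Longrightarrow> x \<in> L2 Y"
  unfolding L2_def mem_Collect_eq using ES_sqlimsup[of Y X x] by (rule order.strict_trans1)

lemma ES_fnorm:
  assumes "eventually_subseq Y X" "x \<in> L2 X"
  shows "fnorm Y x \<le> fnorm X x"
proof -
  have "x \<in> L2 Y" using ES_L2 assms by blast
  then have "ereal ((fnorm Y x)\<^sup>2) \<le> ereal ((fnorm X x)\<^sup>2)"
    using L2_fin[of x Y] L2_fin[of x X] assms(2) ES_sqlimsup[OF assms(1), of x] by simp
  then have "(fnorm Y x)\<^sup>2 \<le> (fnorm X x)\<^sup>2" by (simp only: ereal_less_eq)
  then show ?thesis using fnorm_nonneg[of X x] by (rule power2_le_imp_le)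
qed

lemma shift_sqlimsup: "sqlimsup (X \<circ> (\<lambda>i. k + i)) x = sqlimsup X x"
proof -
  have "sqlimsup (X \<circ> (\<lambda>i. k + i)) x = limsup (\<lambda>N. ereal (sq X x (N + k)))"
    unfolding sqlimsup_sq sq_comp by (simp add: add.commute)
  also have "\<dots> = sqlimsup X x" unfolding sqlimsup_sq by (rule limsup_shift_k)
  finally show ?thesis .
qed

lemma shift_fnorm: "fnorm (X \<circ> (\<lambda>i. k + i)) x = fnorm X x"
  by (simp add: fnorm_def shift_sqlimsup)
lemma shift_L2: "x \<in> L2 (X \<circ> (\<lambda>i. k + i)) \<longleftrightarrow> x \<in> L2 X"
  by (simp add: L2_def shift_sqlimsup)

definition dd :: "((nat \<Rightarrow> nat set) \<Rightarrow> (nat \<Rightarrow> complex) set) \<Rightarrow> (nat \<Rightarrow> complex) \<Rightarrow> (nat \<Rightarrow> nat set) \<Rightarrow> real" where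
  "dd U f X = Inf {fnorm X (\<lambda>n. f n - g n) | g. g \<in> U X}"

lemma dd_lower: "g \<in> U X \<Longrightarrow> dd U f X \<le> fnorm X (\<lambda>n. f n - g n)"
  unfolding dd_def by (rule cInf_lower) (auto intro!: bdd_belowI[of _ 0] fnorm_nonneg)

lemma dd_nonneg:
  assumes "projection_family U" "folner X"
  shows "0 \<le> dd U f X"
  unfolding dd_def using PF_const[OF assms, of 0]
  by (intro cInf_greatest) (auto intro: fnorm_nonneg)

lemma dd_lessD:
  assumes "projection_family U" "folner X" "dd U f X < c"
  shows "\<exists>g\<in>U X. fnorm X (\<lambda>n. f n - g n) < c"
proof -
  have "{fnorm X (\<lambda>n. f n - g n) | g. g \<in> U X} \<noteq> {}" using PF_const[OF assms(1,2), of 0] by blast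
  from cInf_lessD[OF this] assms(3) show ?thesis unfolding dd_def by blast
qed

lemma dd_mono:
  assumes "projection_family U" "folner X" "folner Y" "eventually_subseq Y X" "f \<in> L2 X"
  shows "dd U f Y \<le> dd U f X"
  unfolding dd_def
proof (rule cInf_mono)
  show "{fnorm X (\<lambda>n. f n - g n) | g. g \<in> U X} \<noteq> {}" using PF_const[OF assms(1,2), of 0] by blast
  show "bdd_below {fnorm Y (\<lambda>n. f n - g n) | g. g \<in> U Y}"
    by (auto intro!: bdd_belowI[of _ 0] fnorm_nonneg)
  fix b assume "b \<in> {fnorm X (\<lambda>n. f n - g n) | g. g \<in> U X}"
  then obtain g where g: "g \<in> U X" "b = fnorm X (\<lambda>n. f n - g n)" by blast
  have "g \<in> U Y" using PF_mono[OF assms(1,2,3,4)] g by blast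
  moreover have "(\<lambda>n. f n - g n) \<in> L2 X" using L2_diff assms(5) PF_L2[OF assms(1,2)] g by blast
  ultimately show "\<exists>a\<in>{fnorm Y (\<lambda>n. f n - g n) | g. g \<in> U Y}. a \<le> b"
    using ES_fnorm[OF assms(4)] g by blast
qed



lemma le_of_eps_nat:
  fixes a b :: real
  assumes "\<And>k::nat. a \<le> b + 1 / (real k + 1)"
  shows "a \<le> b"
proof (rule ccontr)
  assume "\<not> a \<le> b"
  then have "0 < a - b" by simp
  then obtain k where k: "inverse (real (Suc k)) < a - b" using reals_Archimedean by blast
  have "a \<le> b + 1 / (real k + 1)" by (rule assms)
  with k show False by (simp add: inverse_eq_divide add.commute)
qed

lemma stabilize:
  assumes PF: "projection_family U" and F: "folner \<Phi>" and L: "f \<in> L2 \<Phi>"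
  shows "\<exists>s \<delta>. strict_mono s \<and> 0 \<le> \<delta> \<and>
           (\<forall>\<rho>. strict_mono \<rho> \<longrightarrow> \<delta> \<le> dd U f (\<Phi> \<circ> (s \<circ> \<rho>))) \<and>
           (\<forall>\<epsilon>>0. \<exists>k. dd U f (\<Phi> \<circ> (s \<circ> (\<lambda>i. k + i))) < \<delta> + \<epsilon>)"
proof -
  define D where "D t = dd U f (\<Phi> \<circ> t)" for t
  have Dnn: "0 \<le> D t" if "strict_mono t" for t
    unfolding D_def by (rule dd_nonneg[OF PF folner_comp[OF F that]])
  have Dmono: "D (t \<circ> r) \<le> D t" if "strict_mono t" "strict_mono r" for t r
  proof -
    have "D (t \<circ> r) = dd U f ((\<Phi> \<circ> t) \<circ> r)" by (simp add: D_def o_assoc)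
    also have "\<dots> \<le> dd U f (\<Phi> \<circ> t)"
      by (rule dd_mono[OF PF folner_comp[OF F that(1)] folner_comp[OF folner_comp[OF F that(1)] that(2)]
            ES_comp[OF that(2)] ES_L2[OF ES_comp[OF that(1)] L]])
    finally show ?thesis by (simp add: D_def)
  qed
  define P where "P n t \<longleftrightarrow> strict_mono t \<and> (\<forall>r. strict_mono r \<longrightarrow> D t \<le> D (t \<circ> r) + 1 / (real n + 1))"
    for n :: nat and t :: "nat \<Rightarrow> nat"
  have ex: "\<exists>r'. strict_mono r' \<and> P n (s \<circ> r')" if s: "strict_mono s" for n and s :: "nat \<Rightarrow> nat"
  proof -
    define M where "M = Inf {D (s \<circ> r) | r. strict_mono r}"
    have "D (s \<circ> id) \<in> {D (s \<circ> r) | r. strict_mono r}" using strict_mono_id by blast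
    then have ne: "{D (s \<circ> r) | r. strict_mono r} \<noteq> {}" by (rule ex_in_conv[THEN iffD1, OF exI])
    have bdd: "bdd_below {D (s \<circ> r) | r. strict_mono r}"
    proof (rule bdd_belowI[of _ 0])
      fix x assume "x \<in> {D (s \<circ> r) | r. strict_mono r}"
      then obtain r where "strict_mono r" "x = D (s \<circ> r)" by blast
      then show "0 \<le> x" using Dnn[OF strict_mono_o[OF s \<open>strict_mono r\<close>]] by simp
    qed
    have "M < M + 1 / (real n + 1)" by simp
    then have "Inf {D (s \<circ> r) | r. strict_mono r} < M + 1 / (real n + 1)" by (simp only: M_def)
    from cInf_lessD[OF ne this] obtain x where "x \<in> {D (s \<circ> r) | r. strict_mono r}" "x < M + 1 / (real n + 1)"
      by blast
    then obtain r' where r': "strict_mono r'" "D (s \<circ> r') < M + 1 / (real n + 1)" by blast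
    have "D (s \<circ> r') \<le> D (s \<circ> r' \<circ> r) + 1 / (real n + 1)" if r: "strict_mono r" for r :: "nat \<Rightarrow> nat"
    proof -
      have mem: "D (s \<circ> (r' \<circ> r)) \<in> {D (s \<circ> r) | r. strict_mono r}"
        using strict_mono_o[OF r'(1) r] by blast
      have "M \<le> D (s \<circ> (r' \<circ> r))" unfolding M_def by (rule cInf_lower[OF mem bdd])
      then show ?thesis using r'(2) by (simp add: o_assoc)
    qed
    then have "P n (s \<circ> r')" unfolding P_def using strict_mono_o[OF s r'(1)] by simp
    then show ?thesis using r'(1) by blast
  qed
  interpret subseqs P by unfold_locales (rule ex)
  have stable: "P n (s \<circ> r)" if r: "strict_mono r" and Ps: "P n s" for r s :: "nat \<Rightarrow> nat" and n
  proof -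
    have s: "strict_mono s" using Ps by (simp add: P_def)
    have "D (s \<circ> r) \<le> D ((s \<circ> r) \<circ> r') + 1 / (real n + 1)" if r': "strict_mono r'" for r' :: "nat \<Rightarrow> nat"
    proof -
      have "D (s \<circ> r) \<le> D s" by (rule Dmono[OF s r])
      also have "\<dots> \<le> D (s \<circ> (r \<circ> r')) + 1 / (real n + 1)"
        using Ps strict_mono_o[OF r r'] unfolding P_def by blast
      finally show ?thesis by (simp add: o_assoc)
    qed
    then show ?thesis using strict_mono_o[OF s r] unfolding P_def by blast
  qed
  have Pk: "P k (diagseq \<circ> ((+) (Suc k)))" for k
    by (rule diagseq_holds) (rule stable)
  define \<delta> where "\<delta> = Inf (range (\<lambda>k. D (diagseq \<circ> ((+) (Suc k)))))"
  have sm_shift: "strict_mono (diagseq \<circ> ((+) (Suc k)))" for k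
    using Pk unfolding P_def by blast
  have bdd: "bdd_below (range (\<lambda>k. D (diagseq \<circ> ((+) (Suc k)))))"
  proof (rule bdd_belowI[of _ 0])
    fix x assume "x \<in> range (\<lambda>k. D (diagseq \<circ> ((+) (Suc k))))"
    then obtain k where "x = D (diagseq \<circ> ((+) (Suc k)))" by blast
    then show "0 \<le> x" using Dnn[OF sm_shift[of k]] by simp
  qed
  have dnn: "0 \<le> \<delta>" unfolding \<delta>_def by (rule cINF_greatest) (simp_all add: Dnn sm_shift)
  have Q: "\<delta> \<le> D (diagseq \<circ> \<rho>)" if \<rho>: "strict_mono \<rho>" for \<rho>
  proof (rule le_of_eps_nat)
    fix k :: nat
    define t where "t = diagseq \<circ> ((+) (Suc k))"
    define r where "r j = \<rho> (j + Suc k) - Suc k" for j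
    have ge: "j + Suc k \<le> \<rho> (j + Suc k)" for j using seq_suble[OF \<rho>] by blast
    have r: "strict_mono r" unfolding strict_mono_Suc_iff r_def
    proof
      fix j
      have "\<rho> (j + Suc k) < \<rho> (Suc j + Suc k)" using \<rho> by (simp add: strict_mono_Suc_iff)
      then show "\<rho> (j + Suc k) - Suc k < \<rho> (Suc j + Suc k) - Suc k" using ge[of j] by linarith
    qed
    have eq: "t \<circ> r = (diagseq \<circ> \<rho>) \<circ> (\<lambda>j. j + Suc k)"
    proof
      fix j show "(t \<circ> r) j = ((diagseq \<circ> \<rho>) \<circ> (\<lambda>j. j + Suc k)) j"
        using ge[of j] by (simp add: t_def r_def)
    qed
    have smr: "strict_mono (\<lambda>j::nat. j + Suc k)" by (simp add: strict_mono_def)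
    have "\<delta> \<le> D t" unfolding \<delta>_def t_def by (rule cInf_lower[OF _ bdd]) blast
    also have "\<dots> \<le> D (t \<circ> r) + 1 / (real k + 1)" using Pk[of k] r unfolding P_def t_def by blast
    also have "D (t \<circ> r) \<le> D (diagseq \<circ> \<rho>)" unfolding eq
      by (rule Dmono[OF strict_mono_o[OF subseq_diagseq \<rho>] smr])
    finally show "\<delta> \<le> D (diagseq \<circ> \<rho>) + 1 / (real k + 1)" by simp
  qed
  have E: "\<exists>k. D (diagseq \<circ> (\<lambda>i. k + i)) < \<delta> + \<epsilon>" if "\<epsilon> > 0" for \<epsilon>
  proof -
    have "Inf (range (\<lambda>k. D (diagseq \<circ> ((+) (Suc k))))) < \<delta> + \<epsilon>" using that by (simp add: \<delta>_def)
    from cInf_lessD[OF _ this] obtain k where "D (diagseq \<circ> ((+) (Suc k))) < \<delta> + \<epsilon>" by blast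
    then show ?thesis by blast
  qed
  show ?thesis
    apply (rule exI[of _ diagseq])
    apply (rule exI[of _ \<delta>])
    using subseq_diagseq dnn Q E unfolding D_def by (simp add: o_assoc)
qed



lemma freq_subseq:
  assumes "frequently P sequentially"
  shows "\<exists>r::nat\<Rightarrow>nat. strict_mono r \<and> (\<forall>n. P (r n))"
proof -
  have inf: "infinite {n. P n}" using assms
    using INFM_iff_infinite cofinite_eq_sequentially by fastforce
  have "\<forall>n. P (enumerate {n. P n} n)" using enumerate_in_set[OF inf] by simp
  then show ?thesis using strict_mono_enumerate[OF inf] by blast
qed

lemma ab_le: "(a::real) * b \<le> (a\<^sup>2 + b\<^sup>2) / 2"
  using zero_le_power2[of "a - b"] by (simp add: power2_eq_square algebra_simps)

lemma cbound: "cmod (favg X (\<lambda>n. u n * cnj (v n)) N) \<le> (sq X u N + sq X v N) / 2"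
proof -
  have "cmod (\<Sum>n\<in>X N. u n * cnj (v n)) \<le> (\<Sum>n\<in>X N. cmod (u n * cnj (v n)))" by (rule norm_sum)
  also have "\<dots> \<le> (\<Sum>n\<in>X N. ((cmod (u n))\<^sup>2 + (cmod (v n))\<^sup>2) / 2)"
  proof (rule sum_mono)
    fix n
    show "cmod (u n * cnj (v n)) \<le> ((cmod (u n))\<^sup>2 + (cmod (v n))\<^sup>2) / 2"
      using ab_le[of "cmod (u n)" "cmod (v n)"] by (simp add: norm_mult)
  qed
  finally have a: "cmod (\<Sum>n\<in>X N. u n * cnj (v n)) \<le> (\<Sum>n\<in>X N. ((cmod (u n))\<^sup>2 + (cmod (v n))\<^sup>2) / 2)" .
  have "cmod (favg X (\<lambda>n. u n * cnj (v n)) N) = cmod (\<Sum>n\<in>X N. u n * cnj (v n)) / real (card (X N))"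
    by (simp add: favg_def norm_divide)
  also have "\<dots> \<le> (\<Sum>n\<in>X N. ((cmod (u n))\<^sup>2 + (cmod (v n))\<^sup>2) / 2) / real (card (X N))"
    by (rule divide_right_mono[OF a]) simp
  also have "\<dots> = (sq X u N + sq X v N) / 2"
    by (simp add: sq_def favg_def sum.distrib sum_divide_distrib[symmetric] add_divide_distrib)
  finally show ?thesis .
qed

lemma pt_expand:
  fixes v u t :: complex
  shows "(cmod (v - t * u))\<^sup>2 = (cmod v)\<^sup>2 - 2 * Re (t * (u * cnj v)) + (cmod t)\<^sup>2 * (cmod u)\<^sup>2"
  unfolding cmod_power2 by (simp add: power2_eq_square algebra_simps)

lemma sq_expand:
  "sq X (\<lambda>n. v n - t * u n) N = sq X v N - 2 * Re (t * favg X (\<lambda>n. u n * cnj (v n)) N) + (cmod t)\<^sup>2 * sq X u N"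
proof -
  have "sq X (\<lambda>n. v n - t * u n) N =
     (\<Sum>n\<in>X N. (cmod (v n))\<^sup>2 - 2 * Re (t * (u n * cnj (v n))) + (cmod t)\<^sup>2 * (cmod (u n))\<^sup>2) / real (card (X N))"
    by (simp add: sq_def favg_def pt_expand)
  also have "\<dots> = sq X v N - 2 * Re (t * favg X (\<lambda>n. u n * cnj (v n)) N) + (cmod t)\<^sup>2 * sq X u N"
    by (simp add: sq_def favg_def sum.distrib sum_subtractf sum_distrib_left[symmetric] Re_sum
       add_divide_distrib diff_divide_distrib Re_divide_of_nat)
  finally show ?thesis .
qed



lemma ortho:
  assumes PF: "projection_family U" and F: "folner Y"
    and Q: "\<And>\<rho>. strict_mono \<rho> \<Longrightarrow> \<delta> \<le> dd U f (Y \<circ> \<rho>)"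
    and g: "g \<in> U Y" and u: "u \<in> U Y" and Lf: "f \<in> L2 Y"
    and nrm: "fnorm Y (\<lambda>n. f n - g n) \<le> \<delta>"
  shows "(\<lambda>N. favg Y (\<lambda>n. u n * cnj (f n - g n)) N) \<longlonglongrightarrow> 0"
proof (rule ccontr)
  define v where "v n = f n - g n" for n
  define c where "c N = favg Y (\<lambda>n. u n * cnj (v n)) N" for N
  assume "\<not> ?thesis"
  then have "\<not> c \<longlonglongrightarrow> 0" unfolding c_def v_def by simp
  then obtain \<epsilon> where \<epsilon>: "\<epsilon> > 0" "\<not> eventually (\<lambda>N. dist (c N) 0 < \<epsilon>) sequentially"
    unfolding tendsto_iff by blast
  then have "frequently (\<lambda>N. \<epsilon> \<le> cmod (c N)) sequentially"
    unfolding not_eventually by (auto elim: frequently_elim1)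
  then obtain r1 :: "nat \<Rightarrow> nat" where r1: "strict_mono r1" "\<And>N. \<epsilon> \<le> cmod (c (r1 N))"
    using freq_subseq by blast
  have gL: "g \<in> L2 Y" using g PF_L2[OF PF F] by blast
  have uL: "u \<in> L2 Y" using u PF_L2[OF PF F] by blast
  have vL: "v \<in> L2 Y" unfolding v_def by (rule L2_diff[OF Lf gL])
  define Mu where "Mu = (fnorm Y u + 1)\<^sup>2"
  define Mv where "Mv = (fnorm Y v + 1)\<^sup>2"
  have evu: "eventually (\<lambda>N. sq Y u N < Mu) sequentially"
    unfolding Mu_def by (rule ev_lt[OF uL]) simp
  have evv: "eventually (\<lambda>N. sq Y v N < Mv) sequentially"
    unfolding Mv_def by (rule ev_lt[OF vL]) simp
  have Mu0: "0 < Mu" unfolding Mu_def using fnorm_nonneg[of Y u] by simp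
  have "eventually (\<lambda>N. norm (c N) \<le> norm ((Mu + Mv) / 2)) sequentially"
    using evu evv
  proof eventually_elim
    case (elim N)
    have "norm (c N) \<le> (sq Y u N + sq Y v N) / 2" unfolding c_def by (rule cbound)
    also have "\<dots> \<le> (Mu + Mv) / 2" using elim by simp
    also have "\<dots> \<le> norm ((Mu + Mv) / 2)" unfolding real_norm_def by (rule abs_ge_self)
    finally show ?case .
  qed
  then have "Bseq c" by (rule Bseq_eventually_mono) simp
  then have "Bseq (\<lambda>N. c (r1 N))" by (rule Bseq_subseq)
  then have "bounded (range (c \<circ> r1))" by (simp add: Bseq_eq_bounded o_def)
  then obtain c0 r2 where r2: "strict_mono (r2 :: nat \<Rightarrow> nat)" "((c \<circ> r1) \<circ> r2) \<longlonglongrightarrow> c0"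
    using bounded_imp_convergent_subsequence by blast
  define r where "r = r1 \<circ> r2"
  have r: "strict_mono r" unfolding r_def by (rule strict_mono_o[OF r1(1) r2(1)])
  have cr: "(\<lambda>N. c (r N)) \<longlonglongrightarrow> c0" using r2(2) by (simp add: r_def o_def)
  have "\<epsilon> \<le> cmod c0"
  proof (rule LIMSEQ_le_const)
    show "(\<lambda>N. cmod (c (r N))) \<longlonglongrightarrow> cmod c0" by (rule tendsto_norm[OF cr])
    show "\<exists>N. \<forall>n\<ge>N. \<epsilon> \<le> cmod (c (r n))" using r1(2) by (simp add: r_def)
  qed
  then have c0: "0 < cmod c0" using \<epsilon>(1) by linarith
  define s where "s = 1 / (Mu + 1)"
  have s0: "0 < s" unfolding s_def using Mu0 by simp
  have sMu: "s * Mu \<le> 1" unfolding s_def using Mu0 by (simp add: field_simps)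
  define t where "t = complex_of_real s * cnj c0"
  define \<kappa> where "\<kappa> = s * (cmod c0)\<^sup>2"
  have \<kappa>0: "0 < \<kappa>" unfolding \<kappa>_def using s0 c0 by simp
  have Ret: "Re (t * c0) = \<kappa>" unfolding t_def \<kappa>_def
    by (simp add: mult.assoc[symmetric] complex_mult_cnj cmod_power2 mult.commute)
  have cmt: "(cmod t)\<^sup>2 = s * \<kappa>" unfolding t_def \<kappa>_def using s0
    by (simp add: norm_mult power_mult_distrib power2_eq_square)
  define Z where "Z = Y \<circ> r"
  have FZ: "folner Z" unfolding Z_def by (rule folner_comp[OF F r])
  define w where "w n = g n + t * u n" for n
  have wY: "w \<in> U Y" unfolding w_def by (rule PF_add[OF PF F g PF_scale[OF PF F u]])
  have wZ: "w \<in> U Z" using PF_mono[OF PF F FZ] wY ES_comp[OF r] unfolding Z_def by blast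
  have "\<delta> \<le> dd U f Z" unfolding Z_def by (rule Q[OF r])
  also have "\<dots> \<le> fnorm Z (\<lambda>n. f n - w n)" by (rule dd_lower[of w U Z f, OF wZ])
  also have "(\<lambda>n. f n - w n) = (\<lambda>n. v n - t * u n)" by (rule ext) (simp add: w_def v_def)
  finally have lower: "\<delta> \<le> fnorm Z (\<lambda>n. v n - t * u n)" .
  have d0: "0 \<le> \<delta>" using nrm fnorm_nonneg order_trans by blast
  have "fnorm Y v < sqrt (\<delta>\<^sup>2 + \<kappa> / 4)"
  proof -
    have "\<delta> < sqrt (\<delta>\<^sup>2 + \<kappa> / 4)" by (rule real_less_rsqrt) (use \<kappa>0 in simp)
    then show ?thesis using nrm unfolding v_def by simp
  qed
  from ev_lt[OF vL this] have evv2: "eventually (\<lambda>N. sq Y v N < \<delta>\<^sup>2 + \<kappa> / 4) sequentially"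
    using \<kappa>0 by simp
  have "(\<lambda>N. Re (t * c (r N))) \<longlonglongrightarrow> Re (t * c0)"
    by (intro tendsto_Re tendsto_mult_left cr)
  then have evc: "eventually (\<lambda>N. Re (t * c (r N)) > \<kappa> - \<kappa> / 8) sequentially"
    unfolding Ret by (rule order_tendstoD) (use \<kappa>0 in simp)
  have "eventually (\<lambda>N. sq Z (\<lambda>n. v n - t * u n) N \<le> \<delta>\<^sup>2 - \<kappa> / 2) sequentially"
    using eventually_subseq[OF r evv2] eventually_subseq[OF r evu] evc
  proof eventually_elim
    case (elim N)
    have "sq Z (\<lambda>n. v n - t * u n) N = sq Y (\<lambda>n. v n - t * u n) (r N)"
      unfolding Z_def by (rule sq_comp)
    also have "\<dots> = sq Y v (r N) - 2 * Re (t * c (r N)) + (cmod t)\<^sup>2 * sq Y u (r N)"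
      unfolding c_def by (rule sq_expand)
    also have "(cmod t)\<^sup>2 * sq Y u (r N) \<le> s * \<kappa> * Mu"
      unfolding cmt using elim(2) s0 \<kappa>0 by (intro mult_left_mono) auto
    also have "s * \<kappa> * Mu \<le> \<kappa>"
    proof -
      have "s * \<kappa> * Mu = \<kappa> * (s * Mu)" by (simp add: algebra_simps)
      also have "\<dots> \<le> \<kappa>" by (rule mult_left_le[OF sMu]) (use \<kappa>0 in simp)
      finally show ?thesis .
    qed
    finally show ?case using elim(1,3) by linarith
  qed
  then have "fnorm Z (\<lambda>n. v n - t * u n) \<le> sqrt (\<delta>\<^sup>2 - \<kappa> / 2)"
  proof -
    assume ev: "eventually (\<lambda>N. sq Z (\<lambda>n. v n - t * u n) N \<le> \<delta>\<^sup>2 - \<kappa> / 2) sequentially"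
    have "eventually (\<lambda>N. sq Z (\<lambda>n. v n - t * u n) N \<le> \<delta>\<^sup>2 - \<kappa> / 2 + \<eta>) sequentially"
      if "\<eta> > 0" for \<eta>
      by (rule eventually_mono[OF ev]) (use that in linarith)
    then show ?thesis using le_fnorm by blast
  qed
  also have "\<dots> < sqrt (\<delta>\<^sup>2)" by (rule real_sqrt_less_mono) (use \<kappa>0 in simp)
  also have "\<dots> = \<delta>" using d0 by simp
  finally show False using lower by simp
qed

lemma fin:
  assumes PF: "projection_family U" and F: "folner Y"
    and Q: "\<And>\<rho>. strict_mono \<rho> \<Longrightarrow> \<delta> \<le> dd U f (Y \<circ> \<rho>)"
    and g: "g \<in> U Y" and Lf: "f \<in> L2 Y"
    and nrm: "fnorm Y (\<lambda>n. f n - g n) \<le> \<delta>"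
  shows "(\<lambda>n. f n - g n) \<in> perp U Y \<and> fnorm Y (\<lambda>n. f n - g n) = dd U f Y"
proof
  have gL: "g \<in> L2 Y" using g PF_L2[OF PF F] by blast
  have vL: "(\<lambda>n. f n - g n) \<in> L2 Y" by (rule L2_diff[OF Lf gL])
  have "inner_exists Y u (\<lambda>n. f n - g n) \<and> finner Y u (\<lambda>n. f n - g n) = 0" if u: "u \<in> U Y" for u
  proof -
    have lim: "(\<lambda>N. favg Y (\<lambda>n. u n * cnj (f n - g n)) N) \<longlonglongrightarrow> 0"
      by (rule ortho[OF PF F Q g u Lf nrm])
    then have "convergent (favg Y (\<lambda>n. u n * cnj (f n - g n)))" by (auto intro: convergentI)
    moreover have "lim (favg Y (\<lambda>n. u n * cnj (f n - g n))) = 0" using lim by (auto intro: limI)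
    ultimately show ?thesis unfolding inner_exists_def finner_def by simp
  qed
  then show "(\<lambda>n. f n - g n) \<in> perp U Y" unfolding perp_def using vL by blast
  have "\<delta> \<le> dd U f (Y \<circ> id)" by (rule Q[OF strict_mono_id])
  then have "\<delta> \<le> dd U f Y" by simp
  moreover have "dd U f Y \<le> fnorm Y (\<lambda>n. f n - g n)" by (rule dd_lower[of g U Y f, OF g])
  ultimately show "fnorm Y (\<lambda>n. f n - g n) = dd U f Y" using nrm by linarith
qed



lemma sq_le_comb3:
  assumes "\<And>n. (cmod (x n))\<^sup>2 \<le> a * (cmod (y n))\<^sup>2 + b * (cmod (z n))\<^sup>2 + c * (cmod (w n))\<^sup>2"
  shows "sq X x N \<le> a * sq X y N + b * sq X z N + c * sq X w N"
proof -
  have "sq X x N \<le> favg X (\<lambda>n. a * (cmod (y n))\<^sup>2 + b * (cmod (z n))\<^sup>2 + c * (cmod (w n))\<^sup>2) N"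
    unfolding sq_def by (rule favg_mono_real) (rule assms)
  also have "\<dots> = a * sq X y N + b * sq X z N + c * sq X w N"
    by (simp add: sq_def favg_def sum.distrib sum_distrib_left add_divide_distrib)
  finally show ?thesis .
qed

lemma para:
  fixes a b c :: complex
  shows "(cmod (a - b))\<^sup>2 \<le> 2 * (cmod (c - a))\<^sup>2 + 2 * (cmod (c - b))\<^sup>2 + (-4) * (cmod (c - 1/2 * (a + b)))\<^sup>2"
  unfolding cmod_power2 by (simp add: power2_eq_square field_simps)

lemma shift_ES:
  assumes "K \<ge> k"
  shows "eventually_subseq (X \<circ> (\<lambda>n. K + n)) (X \<circ> (\<lambda>n. k + n))"
proof (rule ES_intro[of 0 _ _ "\<lambda>i. i + (K - k)"])
  fix i :: nat
  have "k + (i + (K - k)) = K + i" using assms by simp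
  then show "(X \<circ> (\<lambda>n. K + n)) i = (X \<circ> (\<lambda>n. k + n)) (i + (K - k))" by (simp only: o_def)
qed auto

lemma smono_shift: "strict_mono (\<lambda>n::nat. K + n)"
  by (simp add: strict_mono_def)

lemma cauchy_step:
  assumes PF: "projection_family U" and FX: "folner X" and Lf: "f \<in> L2 X" and d0: "0 \<le> \<delta>"
    and Q: "\<And>\<rho>. strict_mono \<rho> \<Longrightarrow> \<delta> \<le> dd U f (X \<circ> \<rho>)"
    and gi: "gi \<in> U (X \<circ> (\<lambda>n. ki + n))" and gj: "gj \<in> U (X \<circ> (\<lambda>n. kj + n))"
    and ni: "fnorm X (\<lambda>n. f n - gi n) < ai" and nj: "fnorm X (\<lambda>n. f n - gj n) < aj"
    and \<eta>: "\<eta> > 0"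
  shows "eventually (\<lambda>N. sq X (\<lambda>n. gi n - gj n) N \<le> 2 * ai\<^sup>2 + 2 * aj\<^sup>2 - 4 * \<delta>\<^sup>2 + \<eta>) sequentially"
proof -
  define K where "K = max ki kj"
  define Y where "Y = X \<circ> (\<lambda>n. K + n)"
  have FY: "folner Y" unfolding Y_def by (rule folner_comp[OF FX smono_shift])
  have Fi: "folner (X \<circ> (\<lambda>n. ki + n))" by (rule folner_comp[OF FX smono_shift])
  have Fj: "folner (X \<circ> (\<lambda>n. kj + n))" by (rule folner_comp[OF FX smono_shift])
  have giY: "gi \<in> U Y" using PF_mono[OF PF Fi FY] shift_ES[of ki K X] gi unfolding Y_def K_def by auto
  have gjY: "gj \<in> U Y" using PF_mono[OF PF Fj FY] shift_ES[of kj K X] gj unfolding Y_def K_def by auto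
  define m where "m n = 1/2 * (gi n + gj n)" for n
  have mY: "m \<in> U Y" unfolding m_def by (rule PF_scale[OF PF FY PF_add[OF PF FY giY gjY]])
  have giL: "gi \<in> L2 X" using giY PF_L2[OF PF FY] shift_L2 unfolding Y_def by blast
  have gjL: "gj \<in> L2 X" using gjY PF_L2[OF PF FY] shift_L2 unfolding Y_def by blast
  have lowm: "eventually (\<lambda>N. \<delta>\<^sup>2 - \<eta> / 4 < sq X (\<lambda>n. f n - m n) (K + N)) sequentially"
  proof (rule ccontr)
    assume "\<not> ?thesis"
    then have "frequently (\<lambda>N. sq X (\<lambda>n. f n - m n) (K + N) \<le> \<delta>\<^sup>2 - \<eta> / 4) sequentially"
      unfolding not_eventually by (auto elim: frequently_elim1)
    then obtain r :: "nat \<Rightarrow> nat" where r: "strict_mono r" "\<And>N. sq X (\<lambda>n. f n - m n) (K + r N) \<le> \<delta>\<^sup>2 - \<eta> / 4"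
      using freq_subseq by blast
    define Z where "Z = Y \<circ> r"
    have FZ: "folner Z" unfolding Z_def by (rule folner_comp[OF FY r(1)])
    have mZ: "m \<in> U Z" using PF_mono[OF PF FY FZ] ES_comp[OF r(1)] mY unfolding Z_def by blast
    have sqZ: "sq Z (\<lambda>n. f n - m n) N \<le> \<delta>\<^sup>2 - \<eta> / 4" for N
      using r(2)[of N] unfolding Z_def Y_def by (simp add: sq_comp)
    have "eventually (\<lambda>N. sq Z (\<lambda>n. f n - m n) N \<le> \<delta>\<^sup>2 - \<eta> / 4 + e) sequentially" if "e > 0" for e
      using sqZ that by (intro always_eventually allI) (smt (verit))
    then have "fnorm Z (\<lambda>n. f n - m n) \<le> sqrt (\<delta>\<^sup>2 - \<eta> / 4)" using le_fnorm by blast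
    also have "\<dots> < sqrt (\<delta>\<^sup>2)" by (rule real_sqrt_less_mono) (use \<eta> in simp)
    also have "\<dots> = \<delta>" using d0 by simp
    finally have lt: "fnorm Z (\<lambda>n. f n - m n) < \<delta>" .
    have "Z = X \<circ> ((\<lambda>n. K + n) \<circ> r)" unfolding Z_def Y_def by (simp add: o_assoc)
    then have "\<delta> \<le> dd U f Z" using Q[OF strict_mono_o[OF smono_shift r(1)]] by simp
    also have "\<dots> \<le> fnorm Z (\<lambda>n. f n - m n)" by (rule dd_lower[of m U Z f, OF mZ])
    finally show False using lt by simp
  qed
  then have lowm': "eventually (\<lambda>N. \<delta>\<^sup>2 - \<eta> / 4 < sq X (\<lambda>n. f n - m n) N) sequentially"
    using eventually_sequentially_seg[of "\<lambda>N. \<delta>\<^sup>2 - \<eta> / 4 < sq X (\<lambda>n. f n - m n) N" K]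
    by (simp add: add.commute)
  have ei: "eventually (\<lambda>N. sq X (\<lambda>n. f n - gi n) N < ai\<^sup>2) sequentially"
    by (rule ev_lt[OF L2_diff[OF Lf giL] ni])
  have ej: "eventually (\<lambda>N. sq X (\<lambda>n. f n - gj n) N < aj\<^sup>2) sequentially"
    by (rule ev_lt[OF L2_diff[OF Lf gjL] nj])
  show ?thesis using lowm' ei ej
  proof eventually_elim
    case (elim N)
    have "sq X (\<lambda>n. gi n - gj n) N \<le> 2 * sq X (\<lambda>n. f n - gi n) N + 2 * sq X (\<lambda>n. f n - gj n) N
            + (-4) * sq X (\<lambda>n. f n - m n) N"
      by (rule sq_le_comb3) (unfold m_def, rule para)
    then show ?case using elim by linarith
  qed
qed



lemma young_real:
  fixes x y t :: real
  assumes "0 < t"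
  shows "2 * x * y \<le> t * x\<^sup>2 + y\<^sup>2 / t"
proof -
  have "0 \<le> (t * x - y)\<^sup>2" by simp
  then have "2 * x * y * t \<le> t * (t * x\<^sup>2) + y\<^sup>2" by (simp add: power2_eq_square algebra_simps)
  then show ?thesis using assms by (simp add: field_simps)
qed

lemma young:
  fixes a b :: complex and t :: real
  assumes "0 < t"
  shows "(cmod (a - b))\<^sup>2 \<le> (1 + t) * (cmod a)\<^sup>2 + (1 + 1 / t) * (cmod b)\<^sup>2"
proof -
  have "(cmod (a - b))\<^sup>2 \<le> (cmod a + cmod b)\<^sup>2"
    by (rule power_mono[OF norm_triangle_ineq4]) simp
  also have "\<dots> = (cmod a)\<^sup>2 + 2 * cmod a * cmod b + (cmod b)\<^sup>2" by (simp add: power2_sum)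
  also have "\<dots> \<le> (cmod a)\<^sup>2 + (t * (cmod a)\<^sup>2 + (cmod b)\<^sup>2 / t) + (cmod b)\<^sup>2"
    using young_real[OF assms, of "cmod a" "cmod b"] by linarith
  also have "\<dots> = (1 + t) * (cmod a)\<^sup>2 + (1 + 1 / t) * (cmod b)\<^sup>2" by (simp add: algebra_simps)
  finally show ?thesis .
qed

lemma ev_obtain: "eventually P sequentially \<Longrightarrow> \<exists>N. P N"
  by (auto simp: eventually_sequentially)



lemma construct:
  assumes PF: "projection_family U" and FX: "folner X" and Lf: "f \<in> L2 X" and d0: "0 \<le> \<delta>"
    and Q: "\<And>\<rho>. strict_mono \<rho> \<Longrightarrow> \<delta> \<le> dd U f (X \<circ> \<rho>)"
    and E: "\<And>\<epsilon>. \<epsilon> > 0 \<Longrightarrow> \<exists>k. dd U f (X \<circ> (\<lambda>i. k + i)) < \<delta> + \<epsilon>"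
  shows "\<exists>\<sigma> h. strict_mono \<sigma> \<and> h \<in> U (X \<circ> \<sigma>) \<and> fnorm (X \<circ> \<sigma>) (\<lambda>n. f n - h n) \<le> \<delta>"
proof -
  define \<epsilon> where "\<epsilon> j = inverse (real (Suc j))" for j
  have \<epsilon>0: "0 < \<epsilon> j" for j unfolding \<epsilon>_def by simp
  have \<epsilon>lim: "\<epsilon> \<longlonglongrightarrow> 0" unfolding \<epsilon>_def by (rule LIMSEQ_inverse_real_of_nat)
  have \<epsilon>mono: "\<epsilon> j \<le> \<epsilon> i" if "i \<le> j" for i j
    unfolding \<epsilon>_def using that by (simp add: le_imp_inverse_le)
  have ex: "\<exists>k g. g \<in> U (X \<circ> (\<lambda>n. k + n)) \<and> fnorm X (\<lambda>n. f n - g n) < \<delta> + \<epsilon> j" for j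
  proof -
    obtain k where k: "dd U f (X \<circ> (\<lambda>i. k + i)) < \<delta> + \<epsilon> j" using E \<epsilon>0 by blast
    then obtain g where g: "g \<in> U (X \<circ> (\<lambda>i. k + i))" "fnorm (X \<circ> (\<lambda>i. k + i)) (\<lambda>n. f n - g n) < \<delta> + \<epsilon> j"
      using dd_lessD[OF PF folner_comp[OF FX smono_shift]] by blast
    then show ?thesis unfolding shift_fnorm by blast
  qed
  then obtain k g where kg: "\<And>j. g j \<in> U (X \<circ> (\<lambda>n. k j + n))" "\<And>j. fnorm X (\<lambda>n. f n - g j n) < \<delta> + \<epsilon> j"
    by metis
  define e where "e j = 2 * (\<delta> + \<epsilon> j)\<^sup>2 - 2 * \<delta>\<^sup>2" for j
  have e_mono: "e j \<le> e i" if "i \<le> j" for i j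
  proof -
    have "(\<delta> + \<epsilon> j)\<^sup>2 \<le> (\<delta> + \<epsilon> i)\<^sup>2"
      by (rule power_mono) (use \<epsilon>mono[OF that] d0 \<epsilon>0[of j] in auto)
    then show ?thesis unfolding e_def by simp
  qed
  have e_nn: "0 \<le> e j" for j
  proof -
    have "\<delta>\<^sup>2 \<le> (\<delta> + \<epsilon> j)\<^sup>2" by (rule power_mono) (use d0 \<epsilon>0[of j] in auto)
    then show ?thesis unfolding e_def by simp
  qed
  have e_lim: "e \<longlonglongrightarrow> 0"
  proof -
    have "(\<lambda>j. 2 * (\<delta> + \<epsilon> j)\<^sup>2 - 2 * \<delta>\<^sup>2) \<longlonglongrightarrow> 2 * (\<delta> + 0)\<^sup>2 - 2 * \<delta>\<^sup>2"
      by (intro tendsto_intros \<epsilon>lim)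
    then show ?thesis unfolding e_def by simp
  qed
  have cau: "eventually (\<lambda>N. sq X (\<lambda>n. g i n - g j n) N \<le> e i + e j + \<eta>) sequentially" if "\<eta> > 0" for i j \<eta>
  proof -
    have "eventually (\<lambda>N. sq X (\<lambda>n. g i n - g j n) N \<le> 2 * (\<delta> + \<epsilon> i)\<^sup>2 + 2 * (\<delta> + \<epsilon> j)\<^sup>2 - 4 * \<delta>\<^sup>2 + \<eta>) sequentially"
      by (rule cauchy_step[OF PF FX Lf d0 Q kg(1) kg(1) kg(2) kg(2) that])
    then show ?thesis unfolding e_def by (simp add: algebra_simps)
  qed
  have finX: "finite (X N)" "X N \<noteq> {}" for N using FX unfolding folner_def by auto
  define W where "W p = (\<Union>N'\<in>{..p}. X N')" for p
  have finW: "finite (W p)" for p unfolding W_def using finX by auto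
  define Cst where "Cst p j m = (\<Sum>n\<in>W p. \<Sum>i<j. (cmod (g i n - g m n))\<^sup>2)" for p j m
  define KK where "KK j = (\<Sum>i\<le>j. k i)" for j
  define good where "good j p N \<longleftrightarrow> p < N \<and> j + KK j \<le> N \<and>
      (\<forall>m\<le>j. sq X (\<lambda>n. g j n - g m n) N \<le> 2 * e m + \<epsilon> j) \<and>
      (\<forall>m\<le>j. Cst p j m \<le> real (card (X N)) * \<epsilon> j)" for j p N
  have exN: "\<exists>N. good j p N" for j p
  proof -
    have e1: "eventually (\<lambda>N. p < N \<and> j + KK j \<le> N) sequentially"
      unfolding eventually_sequentially by (rule exI[of _ "Suc p + j + KK j"]) auto
    have "\<forall>m\<in>{..j}. eventually (\<lambda>N. sq X (\<lambda>n. g j n - g m n) N \<le> 2 * e m + \<epsilon> j) sequentially"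
    proof
      fix m assume "m \<in> {..j}"
      then have "e j \<le> e m" using e_mono by simp
      with cau[OF \<epsilon>0[of j], of j m] show "eventually (\<lambda>N. sq X (\<lambda>n. g j n - g m n) N \<le> 2 * e m + \<epsilon> j) sequentially"
        by (auto elim: eventually_mono)
    qed
    then have e2: "eventually (\<lambda>N. \<forall>m\<in>{..j}. sq X (\<lambda>n. g j n - g m n) N \<le> 2 * e m + \<epsilon> j) sequentially"
      by (rule eventually_ball_finite[rotated]) simp
    have "\<forall>m\<in>{..j}. eventually (\<lambda>N. Cst p j m \<le> real (card (X N)) * \<epsilon> j) sequentially"
    proof
      fix m
      define C where "C = nat \<lceil>Cst p j m * real (Suc j)\<rceil>"
      show "eventually (\<lambda>N. Cst p j m \<le> real (card (X N)) * \<epsilon> j) sequentially"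
        using folner_card[OF FX, of C]
      proof (rule eventually_mono)
        fix N assume "C < card (X N)"
        then have "real C < real (card (X N))" by simp
        moreover have "Cst p j m * real (Suc j) \<le> real C" unfolding C_def by linarith
        ultimately have "Cst p j m * real (Suc j) \<le> real (card (X N))" by simp
        then show "Cst p j m \<le> real (card (X N)) * \<epsilon> j" unfolding \<epsilon>_def
          by (simp add: field_simps)
      qed
    qed
    then have e3: "eventually (\<lambda>N. \<forall>m\<in>{..j}. Cst p j m \<le> real (card (X N)) * \<epsilon> j) sequentially"
      by (rule eventually_ball_finite[rotated]) simp
    have "eventually (good j p) sequentially"
      using e1 e2 e3 by eventually_elim (auto simp: good_def)
    then show ?thesis by (rule ev_obtain)
  qed
  define \<sigma> where "\<sigma> = rec_nat (SOME N. good 0 0 N) (\<lambda>j prev. SOME N. good (Suc j) prev N)"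
  have \<sigma>0: "\<sigma> 0 = (SOME N. good 0 0 N)" by (simp add: \<sigma>_def)
  have \<sigma>S: "\<sigma> (Suc j) = (SOME N. good (Suc j) (\<sigma> j) N)" for j by (simp add: \<sigma>_def)
  define pp where "pp j = (case j of 0 \<Rightarrow> 0 | Suc i \<Rightarrow> \<sigma> i)" for j
  have gd: "good j (pp j) (\<sigma> j)" for j
  proof (cases j)
    case 0 then show ?thesis using someI_ex[OF exN[of 0 0]] by (simp add: \<sigma>0 pp_def)
  next
    case (Suc i) then show ?thesis using someI_ex[OF exN[of "Suc i" "\<sigma> i"]] by (simp add: \<sigma>S pp_def)
  qed
  have sm\<sigma>: "strict_mono \<sigma>"
    unfolding strict_mono_Suc_iff using gd unfolding good_def pp_def by (metis nat.simps(5))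
  have \<sigma>ge: "j + KK j \<le> \<sigma> j" for j using gd[of j] unfolding good_def by blast
  define h where "h n = (if \<exists>j. n \<in> X (\<sigma> j) then g (LEAST j. n \<in> X (\<sigma> j)) n else 0)" for n
  have key: "sq X (\<lambda>n. h n - g m n) (\<sigma> j) \<le> 2 * e m + 2 * \<epsilon> j" if mj: "m \<le> j" for m j
  proof -
    define T where "T n = (\<Sum>i<j. (cmod (g i n - g m n))\<^sup>2)" for n
    have Tnn: "0 \<le> T n" for n unfolding T_def by (rule sum_nonneg) simp
    have pw: "(cmod (h n - g m n))\<^sup>2 \<le> (cmod (g j n - g m n))\<^sup>2 + (if n \<in> W (pp j) then T n else 0)"
      if n: "n \<in> X (\<sigma> j)" for n
    proof -
      define i where "i = (LEAST j. n \<in> X (\<sigma> j))"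
      have exj: "\<exists>j. n \<in> X (\<sigma> j)" using n by blast
      have hi: "h n = g i n" unfolding h_def i_def using exj by simp
      have ij: "i \<le> j" unfolding i_def by (rule Least_le) (rule n)
      have ni: "n \<in> X (\<sigma> i)" unfolding i_def by (rule LeastI) (rule n)
      show ?thesis
      proof (cases "i = j")
        case True then show ?thesis using hi Tnn[of n] by simp
      next
        case False
        then have ilj: "i < j" using ij by simp
        then obtain j' where j': "j = Suc j'" and ij': "i \<le> j'" by (cases j) auto
        then have "\<sigma> i \<le> \<sigma> j'" using strict_mono_leD[OF sm\<sigma>] by blast
        then have "n \<in> W (pp j)" using ni j' unfolding W_def pp_def by auto
        moreover have "(cmod (g i n - g m n))\<^sup>2 \<le> T n" unfolding T_def
          by (rule member_le_sum) (use ilj in auto)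
        ultimately show ?thesis using hi by (simp add: add_increasing)
      qed
    qed
    have sum: "(\<Sum>n\<in>X (\<sigma> j). (cmod (h n - g m n))\<^sup>2) \<le> (\<Sum>n\<in>X (\<sigma> j). (cmod (g j n - g m n))\<^sup>2) + Cst (pp j) j m"
    proof -
      have "(\<Sum>n\<in>X (\<sigma> j). (cmod (h n - g m n))\<^sup>2)
          \<le> (\<Sum>n\<in>X (\<sigma> j). (cmod (g j n - g m n))\<^sup>2 + (if n \<in> W (pp j) then T n else 0))"
        by (rule sum_mono) (rule pw)
      also have "\<dots> = (\<Sum>n\<in>X (\<sigma> j). (cmod (g j n - g m n))\<^sup>2) + (\<Sum>n\<in>X (\<sigma> j). if n \<in> W (pp j) then T n else 0)"
        by (rule sum.distrib)
      also have "(\<Sum>n\<in>X (\<sigma> j). if n \<in> W (pp j) then T n else 0) = (\<Sum>n\<in>X (\<sigma> j) \<inter> W (pp j). T n)"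
        by (rule sum.inter_restrict[symmetric]) (rule finX)
      also have "\<dots> \<le> (\<Sum>n\<in>W (pp j). T n)"
        by (rule sum_mono2[OF finW]) (auto intro: Tnn)
      also have "\<dots> = Cst (pp j) j m" unfolding Cst_def T_def ..
      finally show ?thesis by simp
    qed
    define c where "c = real (card (X (\<sigma> j)))"
    have c0: "0 < c" unfolding c_def using finX[of "\<sigma> j"] by (simp add: card_gt_0_iff)
    have g1: "sq X (\<lambda>n. g j n - g m n) (\<sigma> j) \<le> 2 * e m + \<epsilon> j" using gd[of j] mj unfolding good_def by blast
    have g2: "Cst (pp j) j m \<le> c * \<epsilon> j" using gd[of j] mj unfolding good_def c_def by blast
    have "sq X (\<lambda>n. h n - g m n) (\<sigma> j) = (\<Sum>n\<in>X (\<sigma> j). (cmod (h n - g m n))\<^sup>2) / c"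
      by (simp add: sq_def favg_def c_def)
    also have "\<dots> \<le> ((\<Sum>n\<in>X (\<sigma> j). (cmod (g j n - g m n))\<^sup>2) + Cst (pp j) j m) / c"
      by (rule divide_right_mono[OF sum]) (use c0 in simp)
    also have "\<dots> = sq X (\<lambda>n. g j n - g m n) (\<sigma> j) + Cst (pp j) j m / c"
      by (simp add: sq_def favg_def c_def add_divide_distrib)
    also have "Cst (pp j) j m / c \<le> \<epsilon> j" using g2 c0 by (simp add: divide_le_eq mult.commute)
    finally show ?thesis using g1 by linarith
  qed
  define \<Psi> where "\<Psi> = X \<circ> \<sigma>"
  have F\<Psi>: "folner \<Psi>" unfolding \<Psi>_def by (rule folner_comp[OF FX sm\<sigma>])
  have gU: "g m \<in> U \<Psi>" for m
  proof -
    have kle: "k m \<le> KK i" if "m \<le> i" for i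
      unfolding KK_def by (rule member_le_sum) (use that in auto)
    have ES: "eventually_subseq \<Psi> (X \<circ> (\<lambda>n. k m + n))"
    proof (rule ES_intro[of m _ _ "\<lambda>i. \<sigma> i - k m"])
      fix i assume i: "m \<le> i"
      have "k m \<le> \<sigma> i" using kle[OF i] \<sigma>ge[of i] by linarith
      then show "\<Psi> i = (X \<circ> (\<lambda>n. k m + n)) (\<sigma> i - k m)" unfolding \<Psi>_def by simp
      have "\<sigma> i < \<sigma> (Suc i)" using sm\<sigma> by (simp add: strict_mono_Suc_iff)
      then show "\<sigma> i - k m < \<sigma> (Suc i) - k m" using \<open>k m \<le> \<sigma> i\<close> by linarith
    next
      show "m \<le> \<sigma> m - k m" using kle[of m] \<sigma>ge[of m] by linarith
    qed
    show ?thesis using PF_mono[OF PF folner_comp[OF FX smono_shift] F\<Psi> ES] kg(1)[of m] by blast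
  qed
  have near: "h \<in> L2 \<Psi> \<and> fnorm \<Psi> (\<lambda>n. h n - g m n) \<le> sqrt (2 * e m)" for m
  proof -
    have L: "(\<lambda>n. h n - g m n) \<in> L2 \<Psi> \<and> fnorm \<Psi> (\<lambda>n. h n - g m n) \<le> sqrt (2 * e m)"
    proof (rule le_fnorm)
      fix \<eta> :: real assume \<eta>: "\<eta> > 0"
      have "(\<lambda>j. 2 * \<epsilon> j) \<longlonglongrightarrow> 2 * 0" by (intro tendsto_intros \<epsilon>lim)
      then have ev1: "eventually (\<lambda>j. 2 * \<epsilon> j < \<eta>) sequentially"
        by (rule order_tendstoD) (use \<eta> in simp)
      have ev2: "eventually (\<lambda>j. m \<le> j) sequentially" by (rule eventually_ge_at_top)
      show "eventually (\<lambda>j. sq \<Psi> (\<lambda>n. h n - g m n) j \<le> 2 * e m + \<eta>) sequentially"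
        using ev1 ev2
      proof eventually_elim
        case (elim j)
        have "sq \<Psi> (\<lambda>n. h n - g m n) j = sq X (\<lambda>n. h n - g m n) (\<sigma> j)" unfolding \<Psi>_def by (rule sq_comp)
        also have "\<dots> \<le> 2 * e m + 2 * \<epsilon> j" by (rule key[OF elim(2)])
        finally show ?case using elim(1) by linarith
      qed
    qed
    have gL: "g m \<in> L2 \<Psi>" using gU PF_L2[OF PF F\<Psi>] by blast
    have "h \<in> L2 \<Psi>"
    proof (rule L2_combo[of "\<lambda>n. h n - g m n" \<Psi> "g m" 2 2])
      show "(\<lambda>n. h n - g m n) \<in> L2 \<Psi>" using L by blast
      fix n show "(cmod (h n))\<^sup>2 \<le> 2 * (cmod (h n - g m n))\<^sup>2 + 2 * (cmod (g m n))\<^sup>2"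
        using cmod_sq_add_le[of "h n - g m n" "g m n"] by simp
    qed (use gL in auto)
    then show ?thesis using L by blast
  qed
  have hL: "h \<in> L2 \<Psi>" using near by blast
  have hU: "h \<in> U \<Psi>"
  proof (rule PF_closed[OF PF F\<Psi> hL])
    fix \<epsilon>' :: real assume \<epsilon>': "\<epsilon>' > 0"
    have "(\<lambda>m. sqrt (2 * e m)) \<longlonglongrightarrow> sqrt (2 * 0)" by (intro tendsto_intros e_lim)
    then have "eventually (\<lambda>m. sqrt (2 * e m) < \<epsilon>') sequentially"
      by (rule order_tendstoD) (use \<epsilon>' in simp)
    then obtain m where "sqrt (2 * e m) < \<epsilon>'" using ev_obtain by blast
    then have "fnorm \<Psi> (\<lambda>n. h n - g m n) < \<epsilon>'" using near[of m] by linarith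
    then show "\<exists>u\<in>U \<Psi>. fnorm \<Psi> (\<lambda>n. h n - u n) < \<epsilon>'" using gU by blast
  qed
  have fin: "fnorm \<Psi> (\<lambda>n. f n - h n) \<le> \<delta>"
  proof -
    have "(\<lambda>n. f n - h n) \<in> L2 \<Psi> \<and> fnorm \<Psi> (\<lambda>n. f n - h n) \<le> sqrt (\<delta>\<^sup>2)"
    proof (rule le_fnorm)
      fix \<eta> :: real assume \<eta>: "\<eta> > 0"
      define t where "t = \<eta> / (4 * (\<delta>\<^sup>2 + 1))"
      have t0: "0 < t" unfolding t_def using \<eta> by (intro divide_pos_pos) (auto intro: add_nonneg_pos)
      have td: "t * \<delta>\<^sup>2 \<le> \<eta> / 4"
      proof -
        have "t * \<delta>\<^sup>2 \<le> t * (\<delta>\<^sup>2 + 1)" using t0 by simp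
        also have "\<dots> = \<eta> / 4"
        proof -
          have pos: "0 < \<delta>\<^sup>2 + 1" by (simp add: add_nonneg_pos)
          then show ?thesis unfolding t_def by (simp add: field_simps)
        qed
        finally show ?thesis .
      qed
      have "(\<lambda>m. (1 + t) * (\<delta> + \<epsilon> m)\<^sup>2 + (1 + 1 / t) * (2 * e m)) \<longlonglongrightarrow> (1 + t) * (\<delta> + 0)\<^sup>2 + (1 + 1 / t) * (2 * 0)"
        by (intro tendsto_intros \<epsilon>lim e_lim)
      then have "eventually (\<lambda>m. (1 + t) * (\<delta> + \<epsilon> m)\<^sup>2 + (1 + 1 / t) * (2 * e m) < (1 + t) * \<delta>\<^sup>2 + \<eta> / 4) sequentially"
        by (rule order_tendstoD) (use \<eta> in simp)
      then obtain m where m: "(1 + t) * (\<delta> + \<epsilon> m)\<^sup>2 + (1 + 1 / t) * (2 * e m) < (1 + t) * \<delta>\<^sup>2 + \<eta> / 4"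
        using ev_obtain by blast
      have "(\<lambda>j. (1 + 1 / t) * (2 * \<epsilon> j)) \<longlonglongrightarrow> (1 + 1 / t) * (2 * 0)" by (intro tendsto_intros \<epsilon>lim)
      then have ev1: "eventually (\<lambda>j. (1 + 1 / t) * (2 * \<epsilon> j) < \<eta> / 4) sequentially"
        by (rule order_tendstoD) (use \<eta> in simp)
      have ev2: "eventually (\<lambda>j. m \<le> j) sequentially" by (rule eventually_ge_at_top)
      have gmL: "g m \<in> L2 X" using kg(1)[of m] PF_L2[OF PF folner_comp[OF FX smono_shift]] shift_L2 by blast
      have ev3: "eventually (\<lambda>j. sq X (\<lambda>n. f n - g m n) (\<sigma> j) < (\<delta> + \<epsilon> m)\<^sup>2) sequentially"
        by (rule eventually_subseq[OF sm\<sigma> ev_lt[OF L2_diff[OF Lf gmL] kg(2)]])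
      show "eventually (\<lambda>j. sq \<Psi> (\<lambda>n. f n - h n) j \<le> \<delta>\<^sup>2 + \<eta>) sequentially"
        using ev1 ev2 ev3
      proof eventually_elim
        case (elim j)
        have "sq \<Psi> (\<lambda>n. f n - h n) j = sq X (\<lambda>n. f n - h n) (\<sigma> j)" unfolding \<Psi>_def by (rule sq_comp)
        also have "\<dots> \<le> (1 + t) * sq X (\<lambda>n. f n - g m n) (\<sigma> j) + (1 + 1 / t) * sq X (\<lambda>n. h n - g m n) (\<sigma> j)"
        proof (rule sq_le_comb)
          fix n show "(cmod (f n - h n))\<^sup>2 \<le> (1 + t) * (cmod (f n - g m n))\<^sup>2 + (1 + 1 / t) * (cmod (h n - g m n))\<^sup>2"
            using young[OF t0, of "f n - g m n" "h n - g m n"] by simp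
        qed
        also have "\<dots> \<le> (1 + t) * (\<delta> + \<epsilon> m)\<^sup>2 + (1 + 1 / t) * (2 * e m + 2 * \<epsilon> j)"
          using elim(3) key[OF elim(2)] t0 by (intro add_mono mult_left_mono) auto
        also have "\<dots> = (1 + t) * (\<delta> + \<epsilon> m)\<^sup>2 + (1 + 1 / t) * (2 * e m) + (1 + 1 / t) * (2 * \<epsilon> j)"
          by (simp add: algebra_simps)
        finally have "sq \<Psi> (\<lambda>n. f n - h n) j \<le> (1 + t) * (\<delta> + \<epsilon> m)\<^sup>2 + (1 + 1 / t) * (2 * e m) + (1 + 1 / t) * (2 * \<epsilon> j)" .
        moreover have "(1 + t) * \<delta>\<^sup>2 = \<delta>\<^sup>2 + t * \<delta>\<^sup>2" by (simp add: algebra_simps)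
        ultimately show ?case using m elim(1) td \<eta> by linarith
      qed
    qed
    then show ?thesis using d0 by simp
  qed
  show ?thesis using sm\<sigma> hU fin unfolding \<Psi>_def by blast
qed



lemma fnorm_mono_pt:
  assumes "\<And>n. cmod (x n) \<le> cmod (y n)" "y \<in> L2 X"
  shows "fnorm X x \<le> fnorm X y"
proof -
  have "x \<in> L2 X \<and> fnorm X x \<le> sqrt ((fnorm X y)\<^sup>2)"
  proof (rule le_fnorm)
    fix \<eta> :: real assume \<eta>: "\<eta> > 0"
    have "fnorm X y < sqrt ((fnorm X y)\<^sup>2 + \<eta>)"
      by (rule real_less_rsqrt) (use \<eta> in simp)
    from ev_lt[OF assms(2) this]
    have "eventually (\<lambda>N. sq X y N < (fnorm X y)\<^sup>2 + \<eta>) sequentially"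
      using \<eta> by (simp add: add_nonneg_pos)
    then show "eventually (\<lambda>N. sq X x N \<le> (fnorm X y)\<^sup>2 + \<eta>) sequentially"
    proof (rule eventually_mono)
      fix N assume "sq X y N < (fnorm X y)\<^sup>2 + \<eta>"
      moreover have "sq X x N \<le> 1 * sq X y N + 0 * sq X y N"
        by (rule sq_le_comb) (use assms(1) in \<open>simp add: power_mono\<close>)
      ultimately show "sq X x N \<le> (fnorm X y)\<^sup>2 + \<eta>" by simp
    qed
  qed
  then show ?thesis using fnorm_nonneg[of X y] by simp
qed

lemma clip_le:
  fixes a0 b0 x y :: real
  assumes "a0 \<le> x" "x \<le> b0"
  shows "\<bar>x - max a0 (min b0 y)\<bar> \<le> \<bar>x - y\<bar>"
  using assms by (auto simp: max_def min_def abs_if)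

lemma clip_U:
  assumes PF: "projection_family U" and F: "folner Y" and hU: "h \<in> U Y"
  shows "(\<lambda>n. complex_of_real (max a0 (min b0 (Re (h n))))) \<in> U Y"
proof -
  have rv: "is_real_valued (\<lambda>n. complex_of_real (z n))" for z unfolding is_real_valued_def by simp
  have "(\<lambda>n. complex_of_real (1/2) * (h n + cnj (h n))) \<in> U Y"
    by (rule PF_scale[OF PF F PF_add[OF PF F hU PF_cnj[OF PF F hU]]])
  moreover have "(\<lambda>n. complex_of_real (1/2) * (h n + cnj (h n))) = (\<lambda>n. complex_of_real (Re (h n)))"
    by (rule ext) (simp add: complex_add_cnj)
  ultimately have hr: "(\<lambda>n. complex_of_real (Re (h n))) \<in> U Y" by simp
  have "(\<lambda>n. (-1) * complex_of_real (Re (h n))) \<in> U Y" by (rule PF_scale[OF PF F hr])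
  moreover have "(\<lambda>n. (-1) * complex_of_real (Re (h n))) = (\<lambda>n. complex_of_real (- Re (h n)))"
    by (rule ext) simp
  ultimately have u1: "(\<lambda>n. complex_of_real (- Re (h n))) \<in> U Y" by simp
  have cb: "(\<lambda>n. complex_of_real (- b0)) \<in> U Y" by (rule PF_const[OF PF F])
  have "(\<lambda>n. complex_of_real (max (Re (complex_of_real (- b0))) (Re (complex_of_real (- Re (h n)))))) \<in> U Y"
    by (rule PF_max[OF PF F cb u1 rv rv])
  then have m1: "(\<lambda>n. complex_of_real (max (- b0) (- Re (h n)))) \<in> U Y" by simp
  have "(\<lambda>n. (-1) * complex_of_real (max (- b0) (- Re (h n)))) \<in> U Y" by (rule PF_scale[OF PF F m1])
  moreover have "(\<lambda>n. (-1) * complex_of_real (max (- b0) (- Re (h n)))) = (\<lambda>n. complex_of_real (min b0 (Re (h n))))"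
    by (rule ext) (simp add: max_def min_def)
  ultimately have m2: "(\<lambda>n. complex_of_real (min b0 (Re (h n)))) \<in> U Y" by simp
  have ca: "(\<lambda>n. complex_of_real a0) \<in> U Y" by (rule PF_const[OF PF F])
  have "(\<lambda>n. complex_of_real (max (Re (complex_of_real a0)) (Re (complex_of_real (min b0 (Re (h n))))))) \<in> U Y"
    by (rule PF_max[OF PF F ca m2 rv rv])
  then show ?thesis by simp
qed

theorem theorem3p9:
  fixes U :: "(nat \<Rightarrow> nat set) \<Rightarrow> (nat \<Rightarrow> complex) set"
    and \<Phi> :: "nat \<Rightarrow> nat set"
    and f :: "nat \<Rightarrow> complex"
  assumes "projection_family U"
    and "folner \<Phi>"
    and "f \<in> L2 \<Phi>"
  shows "\<exists>\<sigma>::nat \<Rightarrow> nat. strict_mono \<sigma> \<and>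
           (\<exists>fU \<in> U (\<Phi> \<circ> \<sigma>).
              (\<lambda>n. f n - fU n) \<in> perp U (\<Phi> \<circ> \<sigma>) \<and>
              fnorm (\<Phi> \<circ> \<sigma>) (\<lambda>n. f n - fU n) =
                Inf {fnorm (\<Phi> \<circ> \<sigma>) (\<lambda>n. f n - g n) | g. g \<in> U (\<Phi> \<circ> \<sigma>)} \<and>
              (\<forall>a b::real. (\<forall>n. f n \<in> complex_of_real ` {a..b}) \<longrightarrow>
                           (\<forall>n. fU n \<in> complex_of_real ` {a..b})))"
proof -
  note PF = assms(1) and F = assms(2) and L = assms(3)
  obtain s \<delta> where s: "strict_mono s" and d0: "0 \<le> \<delta>"
    and Q0: "\<And>\<rho>. strict_mono \<rho> \<Longrightarrow> \<delta> \<le> dd U f (\<Phi> \<circ> (s \<circ> \<rho>))"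
    and E0: "\<And>\<epsilon>. \<epsilon> > 0 \<Longrightarrow> \<exists>k. dd U f (\<Phi> \<circ> (s \<circ> (\<lambda>i. k + i))) < \<delta> + \<epsilon>"
    using stabilize[OF PF F L] by blast
  define X where "X = \<Phi> \<circ> s"
  have FX: "folner X" unfolding X_def by (rule folner_comp[OF F s])
  have LX: "f \<in> L2 X" unfolding X_def by (rule ES_L2[OF ES_comp[OF s] L])
  have QX: "\<delta> \<le> dd U f (X \<circ> \<rho>)" if "strict_mono \<rho>" for \<rho>
    using Q0[OF that] unfolding X_def by (simp add: o_assoc)
  have EX: "\<exists>k. dd U f (X \<circ> (\<lambda>i. k + i)) < \<delta> + \<epsilon>" if "\<epsilon> > 0" for \<epsilon>
    using E0[OF that] unfolding X_def by (simp add: o_assoc)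
  obtain \<sigma> h where \<sigma>: "strict_mono \<sigma>" and hU: "h \<in> U (X \<circ> \<sigma>)"
    and hn: "fnorm (X \<circ> \<sigma>) (\<lambda>n. f n - h n) \<le> \<delta>"
    using construct[OF PF FX LX d0 QX EX] by blast
  define \<Psi> where "\<Psi> = X \<circ> \<sigma>"
  have \<Psi>eq: "\<Phi> \<circ> (s \<circ> \<sigma>) = \<Psi>" unfolding \<Psi>_def X_def by (simp add: o_assoc)
  have F\<Psi>: "folner \<Psi>" unfolding \<Psi>_def by (rule folner_comp[OF FX \<sigma>])
  have L\<Psi>: "f \<in> L2 \<Psi>" unfolding \<Psi>_def by (rule ES_L2[OF ES_comp[OF \<sigma>] LX])
  have Q\<Psi>: "\<delta> \<le> dd U f (\<Psi> \<circ> \<rho>)" if "strict_mono \<rho>" for \<rho>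
    using QX[OF strict_mono_o[OF \<sigma> that]] unfolding \<Psi>_def by (simp add: o_assoc)
  have hU': "h \<in> U \<Psi>" using hU unfolding \<Psi>_def .
  have hL: "h \<in> L2 \<Psi>" using hU' PF_L2[OF PF F\<Psi>] by blast
  have "\<exists>fU\<in>U \<Psi>. fnorm \<Psi> (\<lambda>n. f n - fU n) \<le> \<delta> \<and>
          (\<forall>a b::real. (\<forall>n. f n \<in> complex_of_real ` {a..b}) \<longrightarrow> (\<forall>n. fU n \<in> complex_of_real ` {a..b}))"
  proof (cases "\<exists>a b::real. \<forall>n. f n \<in> complex_of_real ` {a..b}")
    case False
    then show ?thesis using hU' hn unfolding \<Psi>_def by blast
  next
    case True
    then obtain a1 b1 :: real where ab1: "\<And>n. f n \<in> complex_of_real ` {a1..b1}" by blast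
    have fr: "f n = complex_of_real (Re (f n)) \<and> a1 \<le> Re (f n) \<and> Re (f n) \<le> b1" for n
      using ab1[of n] by auto
    define a0 where "a0 = Inf (range (\<lambda>n. Re (f n)))"
    define b0 where "b0 = Sup (range (\<lambda>n. Re (f n)))"
    have bb: "bdd_below (range (\<lambda>n. Re (f n)))" using fr by (auto intro!: bdd_belowI[of _ a1])
    have ba: "bdd_above (range (\<lambda>n. Re (f n)))" using fr by (auto intro!: bdd_aboveI[of _ b1])
    have a0le: "a0 \<le> Re (f n)" for n unfolding a0_def by (rule cInf_lower[OF _ bb]) simp
    have b0ge: "Re (f n) \<le> b0" for n unfolding b0_def by (rule cSup_upper[OF _ ba]) simp
    define fU where "fU n = complex_of_real (max a0 (min b0 (Re (h n))))" for n
    have fUU: "fU \<in> U \<Psi>" unfolding fU_def by (rule clip_U[OF PF F\<Psi> hU'])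
    have pt: "cmod (f n - fU n) \<le> cmod (f n - h n)" for n
    proof -
      have "cmod (f n - fU n) = \<bar>Re (f n) - max a0 (min b0 (Re (h n)))\<bar>"
        using fr[of n] unfolding fU_def by (metis norm_of_real of_real_diff)
      also have "\<dots> \<le> \<bar>Re (f n) - Re (h n)\<bar>" by (rule clip_le[OF a0le b0ge])
      also have "\<dots> = \<bar>Re (f n - h n)\<bar>" by simp
      also have "\<dots> \<le> cmod (f n - h n)" by (rule abs_Re_le_cmod)
      finally show ?thesis .
    qed
    have "fnorm \<Psi> (\<lambda>n. f n - fU n) \<le> fnorm \<Psi> (\<lambda>n. f n - h n)"
      by (rule fnorm_mono_pt[OF pt L2_diff[OF L\<Psi> hL]])
    also have "\<dots> \<le> \<delta>" using hn unfolding \<Psi>_def .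
    finally have nU: "fnorm \<Psi> (\<lambda>n. f n - fU n) \<le> \<delta>" .
    have rng: "\<forall>n. fU n \<in> complex_of_real ` {a..b}" if ab: "\<forall>n. f n \<in> complex_of_real ` {a..b}" for a b :: real
    proof
      fix n
      have fr2: "a \<le> Re (f n) \<and> Re (f n) \<le> b" for n
      proof -
        obtain x where "x \<in> {a..b}" "f n = complex_of_real x" using ab by blast
        then show ?thesis by simp
      qed
      have "a \<le> a0" unfolding a0_def by (rule cINF_greatest) (use fr2 in auto)
      moreover have "b0 \<le> b" unfolding b0_def by (rule cSUP_least) (use fr2 in auto)
      moreover have "a0 \<le> b0" using a0le[of 0] b0ge[of 0] by linarith
      ultimately have "max a0 (min b0 (Re (h n))) \<in> {a..b}" by auto
      then show "fU n \<in> complex_of_real ` {a..b}" unfolding fU_def by blast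
    qed
    show ?thesis using fUU nU rng by blast
  qed
  then obtain fU where fU: "fU \<in> U \<Psi>" "fnorm \<Psi> (\<lambda>n. f n - fU n) \<le> \<delta>"
    "\<forall>a b::real. (\<forall>n. f n \<in> complex_of_real ` {a..b}) \<longrightarrow> (\<forall>n. fU n \<in> complex_of_real ` {a..b})"
    by blast
  have res: "(\<lambda>n. f n - fU n) \<in> perp U \<Psi> \<and> fnorm \<Psi> (\<lambda>n. f n - fU n) = dd U f \<Psi>"
    by (rule fin[OF PF F\<Psi> Q\<Psi> fU(1) L\<Psi> fU(2)])
  have "strict_mono (s \<circ> \<sigma>)" by (rule strict_mono_o[OF s \<sigma>])
  moreover have "\<exists>fU \<in> U (\<Phi> \<circ> (s \<circ> \<sigma>)).
              (\<lambda>n. f n - fU n) \<in> perp U (\<Phi> \<circ> (s \<circ> \<sigma>)) \<and>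
              fnorm (\<Phi> \<circ> (s \<circ> \<sigma>)) (\<lambda>n. f n - fU n) =
                Inf {fnorm (\<Phi> \<circ> (s \<circ> \<sigma>)) (\<lambda>n. f n - g n) | g. g \<in> U (\<Phi> \<circ> (s \<circ> \<sigma>))} \<and>
              (\<forall>a b::real. (\<forall>n. f n \<in> complex_of_real ` {a..b}) \<longrightarrow>
                           (\<forall>n. fU n \<in> complex_of_real ` {a..b}))"
    unfolding \<Psi>eq using fU res unfolding dd_def by blast
  ultimately show ?thesis by blast
qed

end
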